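(* The graph $C_3+P_3$ is of class $\mathcal C_2$.
   Context: All graphs are finite, simple and undirected. $C_n$ and $P_n$ denote the cycle and the path on $n$ vertices. The join $G+H$ is obtained from vertex-disjoint copies of $G$ and $H$ by adding all edges between $V(G)$ and $V(H)$. A drawing is 1-planar if each edge is crossed at most once (adjacent edges never cross, no edge crosses itself); a graph is 1-planar if it has such a drawing. For a 1-planar drawing $D$, $D^\times$ is the plane graph obtained by turning each crossing into a new degree-4 vertex (a false vertex); $N_{D^\times}(c)$ is the neighbour set of a false vertex $c$. A 1-planar graph is of class $\mathcal C_0$ if it has a 1-planar drawing with $|N_{D^\times}(c_1)\cap N_{D^\times}(c_2)|=0$ for all distinct false vertices; for $i\in\{1,2\}$ it is of class $\mathcal C_i$ if it is not of class $\mathcal C_k$ for any $k<i$ and it has a 1-planar drawing with $|N_{D^\times}(c_1)\cap N_{D^\times}(c_2)|\le i$ for all distinct false vertices $c_1,c_2$. *)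

theory Defs
  imports "HOL-Analysis.Analysis"
begin

definition cycle_verts :: "nat \<Rightarrow> nat set" where
  "cycle_verts n = {0..<n}"

definition cycle_edges :: "nat \<Rightarrow> nat set set" where
  "cycle_edges n = {{i, (i + 1) mod n} | i. i < n}"

definition path_verts :: "nat \<Rightarrow> nat set" where
  "path_verts n = {0..<n}"

definition path_edges :: "nat \<Rightarrow> nat set set" where
  "path_edges n = {{i, i + 1} | i. i + 1 < n}"

definition join_verts :: "'a set \<Rightarrow> 'b set \<Rightarrow> ('a + 'b) set" where
  "join_verts V1 V2 = Inl ` V1 \<union> Inr ` V2"

definition join_edges ::
  "'a set \<Rightarrow> 'a set set \<Rightarrow> 'b set \<Rightarrow> 'b set set \<Rightarrow> ('a + 'b) set set" where
  "join_edges V1 E1 V2 E2 =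
     (\<lambda>e. Inl ` e) ` E1 \<union> (\<lambda>e. Inr ` e) ` E2 \<union> {{Inl a, Inr b} | a b. a \<in> V1 \<and> b \<in> V2}"

definition is_drawing ::
  "'a set \<Rightarrow> 'a set set \<Rightarrow> ('a \<Rightarrow> complex) \<Rightarrow> ('a set \<Rightarrow> real \<Rightarrow> complex) \<Rightarrow> bool" where
  "is_drawing V E pos crv \<longleftrightarrow>
     inj_on pos V \<and>
     (\<forall>e\<in>E. arc (crv e) \<and>
        {pathstart (crv e), pathfinish (crv e)} = pos ` e \<and>
        path_image (crv e) \<inter> pos ` V = pos ` e)"

definition edge_interior :: "('a \<Rightarrow> complex) \<Rightarrow> ('a set \<Rightarrow> real \<Rightarrow> complex) \<Rightarrow> 'a set \<Rightarrow> complex set" where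
  "edge_interior pos crv e = path_image (crv e) - pos ` e"

definition crosses_at ::
  "'a set set \<Rightarrow> ('a \<Rightarrow> complex) \<Rightarrow> ('a set \<Rightarrow> real \<Rightarrow> complex) \<Rightarrow> 'a set \<Rightarrow> 'a set \<Rightarrow> complex \<Rightarrow> bool" where
  "crosses_at E pos crv e f p \<longleftrightarrow>
     e \<in> E \<and> f \<in> E \<and> e \<noteq> f \<and> p \<in> edge_interior pos crv e \<and> p \<in> edge_interior pos crv f"

definition one_planar_drawing ::
  "'a set \<Rightarrow> 'a set set \<Rightarrow> ('a \<Rightarrow> complex) \<Rightarrow> ('a set \<Rightarrow> real \<Rightarrow> complex) \<Rightarrow> bool" where
  "one_planar_drawing V E pos crv \<longleftrightarrow>
     is_drawing V E pos crv \<and>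
     (\<forall>e f p. crosses_at E pos crv e f p \<longrightarrow> e \<inter> f = {}) \<and>
     (\<forall>e f g p q. crosses_at E pos crv e f p \<and> crosses_at E pos crv e g q \<longrightarrow> f = g \<and> p = q)"

text \<open>In a 1-planar drawing, the false vertex at the crossing of edges e and f has as
  neighbours in the planarization exactly the four end vertices of e and f, i.e. e \<union> f.
  A drawing has "parameter at most i" if any two distinct false vertices share at most
  i neighbours.\<close>
definition has_1planar_drawing_le ::
  "'a set \<Rightarrow> 'a set set \<Rightarrow> nat \<Rightarrow> bool" where
  "has_1planar_drawing_le V E i \<longleftrightarrow>
     (\<exists>pos crv. one_planar_drawing V E pos crv \<and>
        (\<forall>e1 f1 p e2 f2 q. crosses_at E pos crv e1 f1 p \<and> crosses_at E pos crv e2 f2 q \<and> p \<noteq> q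
            \<longrightarrow> card ((e1 \<union> f1) \<inter> (e2 \<union> f2)) \<le> i))"

definition class_C0 :: "'a set \<Rightarrow> 'a set set \<Rightarrow> bool" where
  "class_C0 V E \<longleftrightarrow> has_1planar_drawing_le V E 0"

definition class_C1 :: "'a set \<Rightarrow> 'a set set \<Rightarrow> bool" where
  "class_C1 V E \<longleftrightarrow> \<not> class_C0 V E \<and> has_1planar_drawing_le V E 1"

definition class_C2 :: "'a set \<Rightarrow> 'a set set \<Rightarrow> bool" where
  "class_C2 V E \<longleftrightarrow> \<not> class_C0 V E \<and> \<not> class_C1 V E \<and> has_1planar_drawing_le V E 2"

end

theory Submission
  imports Defs
begin


lemma conn_in_inside:
  fixes X :: "complex set"
  assumes "closed X" "connected C" "C \<inter> X = {}" "y \<in> C" "y \<in> inside X"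
  shows "C \<subseteq> inside X"
proof (rule ccontr)
  assume "\<not> C \<subseteq> inside X"
  then have "C - inside X \<noteq> {}" by blast
  moreover have "C \<inter> inside X \<noteq> {}" using assms by blast
  ultimately have "C \<inter> frontier (inside X) \<noteq> {}"
    using connected_Int_frontier[OF assms(2)] by blast
  then show False using frontier_inside_subset[OF assms(1)] assms(3) by blast
qed

lemma conn_in_outside:
  fixes X :: "complex set"
  assumes "closed X" "connected C" "C \<inter> X = {}" "y \<in> C" "y \<in> outside X"
  shows "C \<subseteq> outside X"
proof (rule ccontr)
  assume "\<not> C \<subseteq> outside X"
  then have "C - outside X \<noteq> {}" by blast
  moreover have "C \<inter> outside X \<noteq> {}" using assms by blast
  ultimately have "C \<inter> frontier (outside X) \<noteq> {}"
    using connected_Int_frontier[OF assms(2)] by blast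
  then show False using frontier_outside_subset[OF assms(1)] assms(3) by blast
qed

lemma cycle_facts:
  fixes P1 P2 :: "real \<Rightarrow> complex"
  assumes "arc P1" "arc P2" "pathstart P1 = u" "pathfinish P1 = v"
    "pathstart P2 = u" "pathfinish P2 = v" "path_image P1 \<inter> path_image P2 = {u,v}"
  shows "inside (path_image P1 \<union> path_image P2) \<noteq> {} \<and>
         connected (inside (path_image P1 \<union> path_image P2)) \<and>
         frontier (inside (path_image P1 \<union> path_image P2)) = path_image P1 \<union> path_image P2"
proof -
  have sp: "simple_path (P1 +++ reversepath P2)"
    using assms by (auto simp: simple_path_join_loop_eq arc_simple_path simple_path_reversepath)
  have cl: "pathfinish (P1 +++ reversepath P2) = pathstart (P1 +++ reversepath P2)"
    using assms by simp
  have pi: "path_image (P1 +++ reversepath P2) = path_image P1 \<union> path_image P2"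
    using assms by (simp add: path_image_join)
  show ?thesis using Jordan_inside_outside[OF sp cl] unfolding pi by blast
qed

lemma stepA:
  fixes P1 P2 P3 :: "real \<Rightarrow> complex"
  assumes a1: "arc P1" and a2: "arc P2" and a3: "arc P3"
    and s1: "pathstart P1 = u" "pathfinish P1 = v"
    and s2: "pathstart P2 = u" "pathfinish P2 = v"
    and s3: "pathstart P3 = u" "pathfinish P3 = v"
    and i12: "path_image P1 \<inter> path_image P2 = {u,v}"
    and i13: "path_image P1 \<inter> path_image P3 = {u,v}"
    and i23: "path_image P2 \<inter> path_image P3 = {u,v}"
    and c1: "c1 \<in> path_image P1" "c1 \<notin> {u,v}"
    and c2: "c2 \<in> path_image P2" "c2 \<notin> {u,v}"
    and H3: "path_image P3 \<inter> inside (path_image P1 \<union> path_image P2) = {}"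
    and H2: "path_image P2 \<inter> inside (path_image P1 \<union> path_image P3) = {}"
    and H1: "path_image P1 \<inter> inside (path_image P2 \<union> path_image P3) = {}"
  shows False
proof -
  let ?S1 = "path_image P1" let ?S2 = "path_image P2" let ?S3 = "path_image P3"
  note J12 = cycle_facts[OF a1 a2 s1 s2 i12]
  note J13 = cycle_facts[OF a1 a3 s1 s3 i13]
  note J23 = cycle_facts[OF a2 a3 s2 s3 i23]
  have cS1: "compact ?S1" "connected ?S1" using a1 arc_imp_path compact_path_image connected_path_image by blast+
  have cS2: "compact ?S2" "connected ?S2" using a2 arc_imp_path compact_path_image connected_path_image by blast+
  have cS3: "compact ?S3" "connected ?S3" using a3 arc_imp_path compact_path_image connected_path_image by blast+
  have no12: "inside (?S1 \<union> ?S2) \<inter> (?S1 \<union> ?S2) = {}" by (rule inside_no_overlap)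
  have no13: "inside (?S1 \<union> ?S3) \<inter> (?S1 \<union> ?S3) = {}" by (rule inside_no_overlap)
  have no23: "inside (?S2 \<union> ?S3) \<inter> (?S2 \<union> ?S3) = {}" by (rule inside_no_overlap)
  obtain z where z: "z \<in> inside (?S1 \<union> ?S2)" using J12 by blast
  have zS3: "z \<notin> ?S3" using z H3 by blast
  have zS12: "z \<notin> ?S1 \<union> ?S2" using z inside_no_overlap by blast
  have "z \<in> inside (?S1 \<union> ?S3) \<or> z \<in> inside (?S2 \<union> ?S3)"
  proof (rule ccontr)
    assume "\<not> ?thesis"
    then have zo1: "z \<in> outside (?S1 \<union> ?S3)" and zo2: "z \<in> outside (?S2 \<union> ?S3)"
      using zS3 zS12 inside_Un_outside by blast+
    have bd: "bounded (?S1 \<union> ?S2 \<union> ?S3)" using cS1 cS2 cS3 by (simp add: compact_imp_bounded)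
    obtain w where w: "w \<in> outside (?S1 \<union> ?S2 \<union> ?S3)"
      using outside_bounded_nonempty[OF bd] by blast
    have wo1: "w \<in> outside (?S1 \<union> ?S3)" using w outside_mono[of "?S1 \<union> ?S3" "?S1 \<union> ?S2 \<union> ?S3"] by blast
    have wo2: "w \<in> outside (?S2 \<union> ?S3)" using w outside_mono[of "?S2 \<union> ?S3" "?S1 \<union> ?S2 \<union> ?S3"] by blast
    have wo12: "w \<in> outside (?S1 \<union> ?S2)" using w outside_mono[of "?S1 \<union> ?S2" "?S1 \<union> ?S2 \<union> ?S3"] by blast
    have cc1: "connected_component (- (?S1 \<union> ?S3)) z w"
      unfolding connected_component_def
      apply (rule exI[of _ "outside (?S1 \<union> ?S3)"])
      using zo1 wo1 connected_outside[of "?S1 \<union> ?S3"] cS1 cS3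
      by (auto simp: compact_imp_bounded outside_inside)
    have cc2: "connected_component (- (?S2 \<union> ?S3)) z w"
      unfolding connected_component_def
      apply (rule exI[of _ "outside (?S2 \<union> ?S3)"])
      using zo2 wo2 connected_outside[of "?S2 \<union> ?S3"] cS2 cS3
      by (auto simp: compact_imp_bounded outside_inside)
    have uv3: "u \<in> ?S3" "v \<in> ?S3" using s3 pathstart_in_path_image pathfinish_in_path_image by metis+
    have int: "(?S1 \<union> ?S3) \<inter> (?S2 \<union> ?S3) = ?S3"
    proof -
      have "?S1 \<inter> ?S2 \<subseteq> ?S3" using i12 uv3 by auto
      then show ?thesis by (auto simp: Un_Int_distrib2[symmetric])
    qed
    have "connected_component (- ((?S1 \<union> ?S3) \<union> (?S2 \<union> ?S3))) z w"
      apply (rule Janiszewski[OF _ _ _ cc1 cc2])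
      using cS1 cS2 cS3 int by (auto intro: compact_imp_closed)
    then obtain T where T: "connected T" "T \<subseteq> - ((?S1 \<union> ?S3) \<union> (?S2 \<union> ?S3))" "z \<in> T" "w \<in> T"
      unfolding connected_component_def by blast
    have "T \<subseteq> inside (?S1 \<union> ?S2)"
      apply (rule conn_in_inside[OF _ T(1) _ T(3) z])
      using cS1 cS2 T(2) by (auto intro: compact_imp_closed)
    then show False using T(4) wo12 by (auto simp: inside_outside)
  qed
  then show False
  proof
    assume z1: "z \<in> inside (?S1 \<union> ?S3)"
    have "inside (?S1 \<union> ?S2) \<subseteq> inside (?S1 \<union> ?S3)"
      apply (rule conn_in_inside[OF _ _ _ z z1])
      subgoal using cS1 cS3 by (auto intro: compact_imp_closed)
      subgoal using J12 by blast
      subgoal using H3 no12 by blast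
      done
    moreover have "inside (?S1 \<union> ?S3) \<subseteq> inside (?S1 \<union> ?S2)"
      apply (rule conn_in_inside[OF _ _ _ z1 z])
      subgoal using cS1 cS2 by (auto intro: compact_imp_closed)
      subgoal using J13 by blast
      subgoal using H2 no13 by blast
      done
    ultimately have "?S1 \<union> ?S2 = ?S1 \<union> ?S3" using J12 J13 by (metis subset_antisym)
    then show False using c2 i12 i23 by blast
  next
    assume z2: "z \<in> inside (?S2 \<union> ?S3)"
    have "inside (?S1 \<union> ?S2) \<subseteq> inside (?S2 \<union> ?S3)"
      apply (rule conn_in_inside[OF _ _ _ z z2])
      subgoal using cS2 cS3 by (auto intro: compact_imp_closed)
      subgoal using J12 by blast
      subgoal using H3 no12 by blast
      done
    moreover have "inside (?S2 \<union> ?S3) \<subseteq> inside (?S1 \<union> ?S2)"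
      apply (rule conn_in_inside[OF _ _ _ z2 z])
      subgoal using cS1 cS2 by (auto intro: compact_imp_closed)
      subgoal using J23 by blast
      subgoal using H1 no23 by blast
      done
    ultimately have "?S1 \<union> ?S2 = ?S2 \<union> ?S3" using J12 J23 by (metis subset_antisym)
    then show False using c1 i12 i13 by blast
  qed
qed

lemma stepB:
  fixes P1 P2 P3 :: "real \<Rightarrow> complex"
  assumes a1: "arc P1" and a2: "arc P2" and a3: "arc P3"
    and s1: "pathstart P1 = u" "pathfinish P1 = v"
    and s2: "pathstart P2 = u" "pathfinish P2 = v"
    and s3: "pathstart P3 = u" "pathfinish P3 = v"
    and uv: "u \<noteq> v"
    and i12: "path_image P1 \<inter> path_image P2 = {u,v}"
    and i13: "path_image P1 \<inter> path_image P3 = {u,v}"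
    and i23: "path_image P2 \<inter> path_image P3 = {u,v}"
    and H: "path_image P3 \<inter> inside (path_image P1 \<union> path_image P2) \<noteq> {}"
    and c1: "c1 \<in> path_image P1" and c2: "c2 \<in> path_image P2"
    and c3: "c3 \<in> path_image P3" "c3 \<notin> {u,v}"
    and x: "x \<notin> path_image P1 \<union> path_image P2 \<union> path_image P3"
    and C1: "connected C1" "x \<in> C1" "c1 \<in> C1" "C1 \<inter> (path_image P2 \<union> path_image P3) = {}"
    and C2: "connected C2" "x \<in> C2" "c2 \<in> C2" "C2 \<inter> (path_image P1 \<union> path_image P3) = {}"
    and C3: "connected C3" "x \<in> C3" "c3 \<in> C3" "C3 \<inter> (path_image P1 \<union> path_image P2) = {}"
  shows False
proof -
  let ?S1 = "path_image P1" let ?S2 = "path_image P2" let ?S3 = "path_image P3"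
  have cS1: "compact ?S1" using a1 arc_imp_path compact_path_image by blast
  have cS2: "compact ?S2" using a2 arc_imp_path compact_path_image by blast
  have cS3: "compact ?S3" using a3 arc_imp_path compact_path_image by blast
  have cl: "closed (?S1 \<union> ?S2)" "closed (?S1 \<union> ?S3)" "closed (?S2 \<union> ?S3)"
    using cS1 cS2 cS3 by (auto intro: compact_imp_closed)
  obtain sp1: "inside (?S1 \<union> ?S3) \<inter> inside (?S2 \<union> ?S3) = {}"
    and sp2: "inside (?S1 \<union> ?S3) \<union> inside (?S2 \<union> ?S3) \<union> (?S3 - {u,v}) = inside (?S1 \<union> ?S2)"
    apply (rule split_inside_simple_closed_curve[of P1 u v P2 P3])
    using a1 a2 a3 s1 s2 s3 uv i12 i13 i23 H by (auto simp: arc_imp_simple_path)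
  have "x \<in> inside (?S1 \<union> ?S2) \<or> x \<in> outside (?S1 \<union> ?S2)"
    using x inside_Un_outside by blast
  then show False
  proof
    assume xo: "x \<in> outside (?S1 \<union> ?S2)"
    have "C3 \<subseteq> outside (?S1 \<union> ?S2)" by (rule conn_in_outside[OF cl(1) C3(1) C3(4) C3(2) xo])
    then show False using C3(3) c3 sp2 inside_outside by blast
  next
    assume xi: "x \<in> inside (?S1 \<union> ?S2)"
    then have "x \<in> inside (?S1 \<union> ?S3) \<or> x \<in> inside (?S2 \<union> ?S3)" using sp2 x by blast
    then show False
    proof
      assume "x \<in> inside (?S1 \<union> ?S3)"
      then have "C2 \<subseteq> inside (?S1 \<union> ?S3)" by (rule conn_in_inside[OF cl(2) C2(1) C2(4) C2(2)])
      then show False using C2(3) c2 sp2 inside_no_overlap[of "?S1 \<union> ?S2"] by blast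
    next
      assume "x \<in> inside (?S2 \<union> ?S3)"
      then have "C1 \<subseteq> inside (?S2 \<union> ?S3)" by (rule conn_in_inside[OF cl(3) C1(1) C1(4) C1(2)])
      then show False using C1(3) c1 sp2 inside_no_overlap[of "?S1 \<union> ?S2"] by blast
    qed
  qed
qed

lemma K33:
  fixes A B :: "nat \<Rightarrow> complex" and g :: "nat \<Rightarrow> nat \<Rightarrow> real \<Rightarrow> complex"
  assumes dA: "\<forall>i<3. \<forall>k<3. i \<noteq> k \<longrightarrow> A i \<noteq> A k"
    and dB: "\<forall>j<3. \<forall>l<3. j \<noteq> l \<longrightarrow> B j \<noteq> B l"
    and dAB: "\<forall>i<3. \<forall>j<3. A i \<noteq> B j"
    and arcs: "\<forall>i<3. \<forall>j<3. arc (g i j) \<and> pathstart (g i j) = A i \<and> pathfinish (g i j) = B j"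
    and int: "\<forall>i<3. \<forall>j<3. \<forall>k<3. \<forall>l<3. (i,j) \<noteq> (k,l) \<longrightarrow>
                 path_image (g i j) \<inter> path_image (g k l) \<subseteq> {A i, B j} \<inter> {A k, B l}"
  shows False
proof -
  define P where "P k = g 0 k +++ reversepath (g 1 k)" for k
  have ar: "arc (g i j)" "pathstart (g i j) = A i" "pathfinish (g i j) = B j" if "i<3" "j<3" for i j
    using arcs that by auto
  have intr: "path_image (g i j) \<inter> path_image (g k l) \<subseteq> {A i, B j} \<inter> {A k, B l}"
    if "i<3" "j<3" "k<3" "l<3" "(i,j) \<noteq> (k,l)" for i j k l
    using int that by blast
  have A01: "A 0 \<noteq> A 1" "A 0 \<noteq> A 2" "A 1 \<noteq> A 2" using dA by auto
  have ABn: "A i \<noteq> B j" if "i<3" "j<3" for i j using dAB that by blast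
  have Bn: "B j \<noteq> B l" if "j<3" "l<3" "j\<noteq>l" for j l using dB that by blast
  have Pk: "arc (P k) \<and> pathstart (P k) = A 0 \<and> pathfinish (P k) = A 1 \<and>
      path_image (P k) = path_image (g 0 k) \<union> path_image (g 1 k)" if "k < 3" for k
  proof -
    have a0: "arc (g 0 k)" "pathstart (g 0 k) = A 0" "pathfinish (g 0 k) = B k"
      using ar that by auto
    have a1: "arc (g 1 k)" "pathstart (g 1 k) = A 1" "pathfinish (g 1 k) = B k"
      using ar that by auto
    have "path_image (g 0 k) \<inter> path_image (g 1 k) \<subseteq> {A 0, B k} \<inter> {A 1, B k}"
      using intr[of 0 k 1 k] that by simp
    then have ii: "path_image (g 0 k) \<inter> path_image (g 1 k) \<subseteq> {B k}"
      using A01 by blast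
    have "arc (P k)" unfolding P_def
      using a0 a1 ii by (subst arc_join_eq) (auto simp: arc_reversepath)
    then show ?thesis using a0 a1 by (simp add: P_def path_image_join)
  qed
  have PP: "path_image (P k) \<inter> path_image (P l) = {A 0, A 1}" if kl: "k < 3" "l < 3" "k \<noteq> l" for k l
  proof
    have "path_image (g i k) \<inter> path_image (g j l) \<subseteq> {A 0, A 1}" if "i < 2" "j < 2" for i j
    proof -
      have "path_image (g i k) \<inter> path_image (g j l) \<subseteq> {A i, B k} \<inter> {A j, B l}"
        using intr[of i k j l] kl that by simp
      moreover have "B k \<noteq> B l" using Bn kl by blast
      moreover have "A i \<noteq> B l" "A j \<noteq> B k" using ABn kl that by auto
      moreover have "A i \<in> {A 0, A 1}" using that by (auto simp: less_2_cases_iff)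
      ultimately have "{A i, B k} \<inter> {A j, B l} \<subseteq> {A 0, A 1}" by auto
      with \<open>path_image (g i k) \<inter> path_image (g j l) \<subseteq> {A i, B k} \<inter> {A j, B l}\<close>
      show ?thesis by (rule subset_trans)
    qed
    note h = this[of 0 0] this[of 0 1] this[of 1 0] this[of 1 1]
    have "path_image (P k) \<inter> path_image (P l) = (path_image (g 0 k) \<union> path_image (g 1 k)) \<inter> (path_image (g 0 l) \<union> path_image (g 1 l))"
      using Pk[OF kl(1)] Pk[OF kl(2)] by simp
    also have "\<dots> \<subseteq> {A 0, A 1}" using h by (simp add: Int_Un_distrib Int_Un_distrib2)
    finally show "path_image (P k) \<inter> path_image (P l) \<subseteq> {A 0, A 1}" .
    show "{A 0, A 1} \<subseteq> path_image (P k) \<inter> path_image (P l)"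
      using pathstart_in_path_image[of "P k"] pathfinish_in_path_image[of "P k"]
        pathstart_in_path_image[of "P l"] pathfinish_in_path_image[of "P l"] Pk[OF kl(1)] Pk[OF kl(2)] by simp
  qed
  have Bk: "B k \<in> path_image (P k)" "B k \<notin> {A 0, A 1}" if "k < 3" for k
  proof -
    have "B k \<in> path_image (g 0 k)" using ar[of 0 k] that pathfinish_in_path_image[of "g 0 k"] by simp
    then show "B k \<in> path_image (P k)" using Pk[OF that] by simp
    show "B k \<notin> {A 0, A 1}" using ABn[of 0 k] ABn[of 1 k] that by auto
  qed
  have A2g: "A 2 \<in> path_image (g 2 k)" "B k \<in> path_image (g 2 k)" "connected (path_image (g 2 k))"
    if "k < 3" for k
  proof -
    have h: "arc (g 2 k)" "pathstart (g 2 k) = A 2" "pathfinish (g 2 k) = B k" using ar[of 2 k] that by auto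
    show "A 2 \<in> path_image (g 2 k)" using pathstart_in_path_image[of "g 2 k"] h by simp
    show "B k \<in> path_image (g 2 k)" using pathfinish_in_path_image[of "g 2 k"] h by simp
    show "connected (path_image (g 2 k))" using h arc_imp_path connected_path_image by blast
  qed
  have x: "A 2 \<notin> path_image (P k)" if "k < 3" for k
  proof
    assume a: "A 2 \<in> path_image (P k)"
    have "path_image (g 2 k) \<inter> path_image (g i k) \<subseteq> {B k}" if "i < 2" for i
    proof -
      have "path_image (g 2 k) \<inter> path_image (g i k) \<subseteq> {A 2, B k} \<inter> {A i, B k}"
        using intr[of 2 k i k] \<open>k<3\<close> that by simp
      moreover have "A 2 \<noteq> A i" using A01 that by (auto simp: less_2_cases_iff)
      ultimately show ?thesis by blast
    qed
    from this[of 0] this[of 1] a Pk[OF that] A2g[OF that] ABn[of 2 k] that show False by auto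
  qed
  have C: "path_image (g 2 k) \<inter> path_image (P l) = {}" if kl: "k < 3" "l < 3" "k \<noteq> l" for k l
  proof -
    have "path_image (g 2 k) \<inter> path_image (g i l) = {}" if "i < 2" for i
    proof -
      have s: "path_image (g 2 k) \<inter> path_image (g i l) \<subseteq> {A 2, B k} \<inter> {A i, B l}"
        using intr[of 2 k i l] kl that by simp
      have "A 2 \<noteq> A i" using A01 that by (auto simp: less_2_cases_iff)
      moreover have "B k \<noteq> B l" using Bn kl by blast
      moreover have "A 2 \<noteq> B l" "A i \<noteq> B k" using ABn kl that by auto
      ultimately have "{A 2, B k} \<inter> {A i, B l} = {}" by auto
      with s show ?thesis by simp
    qed
    from this[of 0] this[of 1] show ?thesis using Pk[OF kl(2)] by (simp add: Int_Un_distrib)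
  qed
  have B: False if H: "path_image (P k3) \<inter> inside (path_image (P k1) \<union> path_image (P k2)) \<noteq> {}"
    and k: "k1 < 3" "k2 < 3" "k3 < 3" "k1 \<noteq> k2" "k1 \<noteq> k3" "k2 \<noteq> k3" for k1 k2 k3
  proof -
    note P1 = Pk[OF k(1)] and P2 = Pk[OF k(2)] and P3 = Pk[OF k(3)]
    have i12: "path_image (P k1) \<inter> path_image (P k2) = {A 0, A 1}" using PP[of k1 k2] k by simp
    have i13: "path_image (P k1) \<inter> path_image (P k3) = {A 0, A 1}" using PP[of k1 k3] k by simp
    have i23: "path_image (P k2) \<inter> path_image (P k3) = {A 0, A 1}" using PP[of k2 k3] k by simp
    have xx: "A 2 \<notin> path_image (P k1) \<union> path_image (P k2) \<union> path_image (P k3)"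
      using x[OF k(1)] x[OF k(2)] x[OF k(3)] by simp
    have C1: "path_image (g 2 k1) \<inter> (path_image (P k2) \<union> path_image (P k3)) = {}"
      using C[of k1 k2] C[of k1 k3] k by (simp add: Int_Un_distrib)
    have C2: "path_image (g 2 k2) \<inter> (path_image (P k1) \<union> path_image (P k3)) = {}"
      using C[of k2 k1] C[of k2 k3] k by (simp add: Int_Un_distrib)
    have C3: "path_image (g 2 k3) \<inter> (path_image (P k1) \<union> path_image (P k2)) = {}"
      using C[of k3 k1] C[of k3 k2] k by (simp add: Int_Un_distrib)
    show False
      by (rule stepB[OF conjunct1[OF P1] conjunct1[OF P2] conjunct1[OF P3]
          conjunct1[OF conjunct2[OF P1]] conjunct1[OF conjunct2[OF conjunct2[OF P1]]]
          conjunct1[OF conjunct2[OF P2]] conjunct1[OF conjunct2[OF conjunct2[OF P2]]]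
          conjunct1[OF conjunct2[OF P3]] conjunct1[OF conjunct2[OF conjunct2[OF P3]]]
          A01(1) i12 i13 i23 H Bk(1)[OF k(1)] Bk(1)[OF k(2)] Bk(1)[OF k(3)] Bk(2)[OF k(3)] xx
          A2g(3)[OF k(1)] A2g(1)[OF k(1)] A2g(2)[OF k(1)] C1
          A2g(3)[OF k(2)] A2g(1)[OF k(2)] A2g(2)[OF k(2)] C2
          A2g(3)[OF k(3)] A2g(1)[OF k(3)] A2g(2)[OF k(3)] C3])
  qed
  have "path_image (P 2) \<inter> inside (path_image (P 0) \<union> path_image (P 1)) \<noteq> {} \<or>
        path_image (P 1) \<inter> inside (path_image (P 0) \<union> path_image (P 2)) \<noteq> {} \<or>
        path_image (P 0) \<inter> inside (path_image (P 1) \<union> path_image (P 2)) \<noteq> {}"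
  proof (rule ccontr)
    assume H: "\<not> ?thesis"
    note P0 = Pk[of 0, simplified] and P1 = Pk[of 1, simplified] and P2 = Pk[of 2, simplified]
    show False
      apply (rule stepA[of "P 0" "P 1" "P 2" "A 0" "A 1" "B 0" "B 1"])
      using H P0 P1 P2 PP[of 0 1] PP[of 0 2] PP[of 1 2] Bk[of 0] Bk[of 1] by simp_all
  qed
  then show False
  proof (elim disjE)
    assume "path_image (P 2) \<inter> inside (path_image (P 0) \<union> path_image (P 1)) \<noteq> {}"
    then show False using B[of 2 0 1] by simp
  next
    assume "path_image (P 1) \<inter> inside (path_image (P 0) \<union> path_image (P 2)) \<noteq> {}"
    then show False using B[of 1 0 2] by simp
  next
    assume "path_image (P 0) \<inter> inside (path_image (P 1) \<union> path_image (P 2)) \<noteq> {}"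
    then show False using B[of 0 1 2] by simp
  qed
qed



lemma in_seg_iff: "(x::complex) \<in> closed_segment A B \<longleftrightarrow>
   (\<exists>u. 0 \<le> u \<and> u \<le> 1 \<and> Re x = (1-u) * Re A + u * Re B \<and> Im x = (1-u) * Im A + u * Im B)"
  by (simp add: in_segment complex_eq_iff)

definition posn :: "nat + nat \<Rightarrow> complex" where
  "posn v = (case v of Inl i \<Rightarrow> (if i = 0 then Complex (-2) (-2) else if i = 1 then Complex 2 3 else Complex 3 (-3))
                      | Inr j \<Rightarrow> (if j = 0 then Complex 2 0 else if j = 1 then Complex 0 (-2) else Complex (-3) (-3)))"

lemma posn_vals: "posn (Inl 0) = Complex (-2) (-2)" "posn (Inl 1) = Complex 2 3" "posn (Inl 2) = Complex 3 (-3)"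
  "posn (Inr 0) = Complex 2 0" "posn (Inr 1) = Complex 0 (-2)" "posn (Inr 2) = Complex (-3) (-3)"
  by (simp_all add: posn_def)

definition crvn :: "(nat + nat) set \<Rightarrow> real \<Rightarrow> complex" where
  "crvn e = linepath (posn (SOME x. x \<in> e)) (posn (SOME y. y \<in> e \<and> y \<noteq> (SOME x. x \<in> e)))"

lemma crvn_props:
  assumes "a \<noteq> b"
  shows "path_image (crvn {a,b}) = closed_segment (posn a) (posn b)"
    "{pathstart (crvn {a,b}), pathfinish (crvn {a,b})} = {posn a, posn b}"
    "posn a \<noteq> posn b \<Longrightarrow> arc (crvn {a,b})"
proof -
  define x where "x = (SOME x. x \<in> {a,b})"
  have x: "x \<in> {a,b}" unfolding x_def by (rule someI[of _ a]) simp
  define y where "y = (SOME y. y \<in> {a,b} \<and> y \<noteq> x)"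
  have "\<exists>y. y \<in> {a,b} \<and> y \<noteq> x" using x assms by auto
  then have y: "y \<in> {a,b} \<and> y \<noteq> x" unfolding y_def by (rule someI_ex)
  have xy: "x = a \<and> y = b \<or> x = b \<and> y = a" using x y by auto
  have c: "crvn {a,b} = linepath (posn x) (posn y)" by (simp add: crvn_def x_def y_def)
  show "path_image (crvn {a,b}) = closed_segment (posn a) (posn b)"
    using xy by (auto simp: c closed_segment_commute)
  show "{pathstart (crvn {a,b}), pathfinish (crvn {a,b})} = {posn a, posn b}"
    using xy by (auto simp: c)
  show "arc (crvn {a,b})" if "posn a \<noteq> posn b"
    using xy that by (auto simp: c arc_linepath)
qed

abbreviation VV :: "(nat + nat) set" where "VV \<equiv> join_verts (cycle_verts 3) (path_verts 3)"
abbreviation EE :: "(nat + nat) set set" where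
  "EE \<equiv> join_edges (cycle_verts 3) (cycle_edges 3) (path_verts 3) (path_edges 3)"

lemma three_eq: "{..<3::nat} = {0,1,2}" "{0..<3::nat} = {0,1,2}" by auto

lemma V_eq: "VV = {Inr 0, Inr 1, Inr 2, Inl 0, Inl 1, Inl 2}"
  by (simp add: join_verts_def cycle_verts_def path_verts_def three_eq)

lemma cyc3: "cycle_edges 3 = {{0,1},{1,2},{2,0}}"
proof -
  have "cycle_edges 3 = (\<lambda>i. {i, (i+1) mod 3}) ` {..<3}" unfolding cycle_edges_def by auto
  then show ?thesis by (simp add: three_eq numeral_2_eq_2)
qed

lemma path3: "path_edges 3 = {{0,1},{1,2}}"
proof -
  have "path_edges 3 = (\<lambda>i. {i, i+1}) ` {..<2}" unfolding path_edges_def by auto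
  moreover have "{..<2::nat} = {0,1}" by auto
  ultimately show ?thesis by (simp add: numeral_2_eq_2)
qed

lemma cross3: "{{Inl a, Inr b} | a b. a \<in> cycle_verts 3 \<and> b \<in> path_verts 3} =
   ({{Inl 0, Inr 0}, {Inl 0, Inr 1}, {Inl 0, Inr 2}, {Inl 1, Inr 0}, {Inl 1, Inr 1}, {Inl 1, Inr 2},
   {Inl 2, Inr 0}, {Inl 2, Inr 1}, {Inl 2, Inr 2}} :: (nat + nat) set set)"
proof -
  have "{{Inl a, Inr b} | a b. a \<in> cycle_verts 3 \<and> b \<in> path_verts 3} =
      ((\<lambda>(a,b). {Inl a, Inr b}) ` ({0,1,2} \<times> {0,1,2::nat}) :: (nat + nat) set set)"
    unfolding cycle_verts_def path_verts_def three_eq by blast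
  also have "\<dots> = (\<lambda>(a,b). {Inl a, Inr b}) ` {(0,0),(0,1),(0,2),(1,0),(1,1),(1,2),(2,0),(2,1),(2,2)}"
    by (intro arg_cong[where f="image _"]) auto
  finally show ?thesis by simp
qed

lemma E_eq: "EE = {{Inl 0, Inr 0}, {Inl 0, Inr 1}, {Inl 0, Inr 2}, {Inl 1, Inr 0}, {Inl 1, Inr 1}, {Inl 1, Inr 2},
   {Inl 2, Inr 0}, {Inl 2, Inr 1}, {Inl 2, Inr 2}, {Inr 0, Inr 1}, {Inr 1, Inr 2}, {Inl 0, Inl 1}, {Inl 1, Inl 2}, {Inl 2, Inl 0}}"
  unfolding join_edges_def cyc3 path3 cross3 by simp


abbreviation EI :: "(nat + nat) set \<Rightarrow> complex set" where
  "EI e \<equiv> edge_interior posn crvn e"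

definition cr :: "(nat + nat) set \<Rightarrow> (nat + nat) set \<Rightarrow> complex set" where
  "cr e f = EI e \<inter> EI f"

lemma EI_doubleton: "a \<noteq> b \<Longrightarrow> EI {a,b} = closed_segment (posn a) (posn b) - {posn a, posn b}"
  by (simp add: edge_interior_def crvn_props)

lemma nonmem:
  "(posn (Inl 2)) \<notin> closed_segment (posn (Inl 0)) (posn (Inl 1))"
  "(posn (Inr 0)) \<notin> closed_segment (posn (Inl 0)) (posn (Inl 1))"
  "(posn (Inr 1)) \<notin> closed_segment (posn (Inl 0)) (posn (Inl 1))"
  "(posn (Inr 2)) \<notin> closed_segment (posn (Inl 0)) (posn (Inl 1))"
  "(posn (Inl 0)) \<notin> closed_segment (posn (Inl 1)) (posn (Inl 2))"
  "(posn (Inr 0)) \<notin> closed_segment (posn (Inl 1)) (posn (Inl 2))"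
  "(posn (Inr 1)) \<notin> closed_segment (posn (Inl 1)) (posn (Inl 2))"
  "(posn (Inr 2)) \<notin> closed_segment (posn (Inl 1)) (posn (Inl 2))"
  "(posn (Inl 1)) \<notin> closed_segment (posn (Inl 2)) (posn (Inl 0))"
  "(posn (Inr 0)) \<notin> closed_segment (posn (Inl 2)) (posn (Inl 0))"
  "(posn (Inr 1)) \<notin> closed_segment (posn (Inl 2)) (posn (Inl 0))"
  "(posn (Inr 2)) \<notin> closed_segment (posn (Inl 2)) (posn (Inl 0))"
  "(posn (Inl 0)) \<notin> closed_segment (posn (Inr 0)) (posn (Inr 1))"
  "(posn (Inl 1)) \<notin> closed_segment (posn (Inr 0)) (posn (Inr 1))"
  "(posn (Inl 2)) \<notin> closed_segment (posn (Inr 0)) (posn (Inr 1))"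
  "(posn (Inr 2)) \<notin> closed_segment (posn (Inr 0)) (posn (Inr 1))"
  "(posn (Inl 0)) \<notin> closed_segment (posn (Inr 1)) (posn (Inr 2))"
  "(posn (Inl 1)) \<notin> closed_segment (posn (Inr 1)) (posn (Inr 2))"
  "(posn (Inl 2)) \<notin> closed_segment (posn (Inr 1)) (posn (Inr 2))"
  "(posn (Inr 0)) \<notin> closed_segment (posn (Inr 1)) (posn (Inr 2))"
  "(posn (Inl 1)) \<notin> closed_segment (posn (Inl 0)) (posn (Inr 0))"
  "(posn (Inl 2)) \<notin> closed_segment (posn (Inl 0)) (posn (Inr 0))"
  "(posn (Inr 1)) \<notin> closed_segment (posn (Inl 0)) (posn (Inr 0))"
  "(posn (Inr 2)) \<notin> closed_segment (posn (Inl 0)) (posn (Inr 0))"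
  "(posn (Inl 1)) \<notin> closed_segment (posn (Inl 0)) (posn (Inr 1))"
  "(posn (Inl 2)) \<notin> closed_segment (posn (Inl 0)) (posn (Inr 1))"
  "(posn (Inr 0)) \<notin> closed_segment (posn (Inl 0)) (posn (Inr 1))"
  "(posn (Inr 2)) \<notin> closed_segment (posn (Inl 0)) (posn (Inr 1))"
  "(posn (Inl 1)) \<notin> closed_segment (posn (Inl 0)) (posn (Inr 2))"
  "(posn (Inl 2)) \<notin> closed_segment (posn (Inl 0)) (posn (Inr 2))"
  "(posn (Inr 0)) \<notin> closed_segment (posn (Inl 0)) (posn (Inr 2))"
  "(posn (Inr 1)) \<notin> closed_segment (posn (Inl 0)) (posn (Inr 2))"
  "(posn (Inl 0)) \<notin> closed_segment (posn (Inl 1)) (posn (Inr 0))"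
  "(posn (Inl 2)) \<notin> closed_segment (posn (Inl 1)) (posn (Inr 0))"
  "(posn (Inr 1)) \<notin> closed_segment (posn (Inl 1)) (posn (Inr 0))"
  "(posn (Inr 2)) \<notin> closed_segment (posn (Inl 1)) (posn (Inr 0))"
  "(posn (Inl 0)) \<notin> closed_segment (posn (Inl 1)) (posn (Inr 1))"
  "(posn (Inl 2)) \<notin> closed_segment (posn (Inl 1)) (posn (Inr 1))"
  "(posn (Inr 0)) \<notin> closed_segment (posn (Inl 1)) (posn (Inr 1))"
  "(posn (Inr 2)) \<notin> closed_segment (posn (Inl 1)) (posn (Inr 1))"
  "(posn (Inl 0)) \<notin> closed_segment (posn (Inl 1)) (posn (Inr 2))"
  "(posn (Inl 2)) \<notin> closed_segment (posn (Inl 1)) (posn (Inr 2))"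
  "(posn (Inr 0)) \<notin> closed_segment (posn (Inl 1)) (posn (Inr 2))"
  "(posn (Inr 1)) \<notin> closed_segment (posn (Inl 1)) (posn (Inr 2))"
  "(posn (Inl 0)) \<notin> closed_segment (posn (Inl 2)) (posn (Inr 0))"
  "(posn (Inl 1)) \<notin> closed_segment (posn (Inl 2)) (posn (Inr 0))"
  "(posn (Inr 1)) \<notin> closed_segment (posn (Inl 2)) (posn (Inr 0))"
  "(posn (Inr 2)) \<notin> closed_segment (posn (Inl 2)) (posn (Inr 0))"
  "(posn (Inl 0)) \<notin> closed_segment (posn (Inl 2)) (posn (Inr 1))"
  "(posn (Inl 1)) \<notin> closed_segment (posn (Inl 2)) (posn (Inr 1))"
  "(posn (Inr 0)) \<notin> closed_segment (posn (Inl 2)) (posn (Inr 1))"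
  "(posn (Inr 2)) \<notin> closed_segment (posn (Inl 2)) (posn (Inr 1))"
  "(posn (Inl 0)) \<notin> closed_segment (posn (Inl 2)) (posn (Inr 2))"
  "(posn (Inl 1)) \<notin> closed_segment (posn (Inl 2)) (posn (Inr 2))"
  "(posn (Inr 0)) \<notin> closed_segment (posn (Inl 2)) (posn (Inr 2))"
  "(posn (Inr 1)) \<notin> closed_segment (posn (Inl 2)) (posn (Inr 2))"
  by (auto simp: posn_def in_seg_iff)

lemma segpairs:
  "closed_segment (posn (Inl 0)) (posn (Inl 1)) \<inter> closed_segment (posn (Inl 1)) (posn (Inl 2)) \<subseteq> {(posn (Inl 1))}"
  "closed_segment (posn (Inl 0)) (posn (Inl 1)) \<inter> closed_segment (posn (Inl 2)) (posn (Inl 0)) \<subseteq> {(posn (Inl 0))}"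
  "closed_segment (posn (Inl 0)) (posn (Inl 1)) \<inter> closed_segment (posn (Inr 0)) (posn (Inr 1)) \<subseteq> {}"
  "closed_segment (posn (Inl 0)) (posn (Inl 1)) \<inter> closed_segment (posn (Inr 1)) (posn (Inr 2)) \<subseteq> {}"
  "closed_segment (posn (Inl 0)) (posn (Inl 1)) \<inter> closed_segment (posn (Inl 0)) (posn (Inr 0)) \<subseteq> {(posn (Inl 0))}"
  "closed_segment (posn (Inl 0)) (posn (Inl 1)) \<inter> closed_segment (posn (Inl 0)) (posn (Inr 1)) \<subseteq> {(posn (Inl 0))}"
  "closed_segment (posn (Inl 0)) (posn (Inl 1)) \<inter> closed_segment (posn (Inl 0)) (posn (Inr 2)) \<subseteq> {(posn (Inl 0))}"
  "closed_segment (posn (Inl 0)) (posn (Inl 1)) \<inter> closed_segment (posn (Inl 1)) (posn (Inr 0)) \<subseteq> {(posn (Inl 1))}"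
  "closed_segment (posn (Inl 0)) (posn (Inl 1)) \<inter> closed_segment (posn (Inl 1)) (posn (Inr 1)) \<subseteq> {(posn (Inl 1))}"
  "closed_segment (posn (Inl 0)) (posn (Inl 1)) \<inter> closed_segment (posn (Inl 1)) (posn (Inr 2)) \<subseteq> {(posn (Inl 1))}"
  "closed_segment (posn (Inl 0)) (posn (Inl 1)) \<inter> closed_segment (posn (Inl 2)) (posn (Inr 0)) \<subseteq> {}"
  "closed_segment (posn (Inl 0)) (posn (Inl 1)) \<inter> closed_segment (posn (Inl 2)) (posn (Inr 1)) \<subseteq> {}"
  "closed_segment (posn (Inl 0)) (posn (Inl 1)) \<inter> closed_segment (posn (Inl 2)) (posn (Inr 2)) \<subseteq> {}"
  "closed_segment (posn (Inl 1)) (posn (Inl 2)) \<inter> closed_segment (posn (Inl 2)) (posn (Inl 0)) \<subseteq> {(posn (Inl 2))}"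
  "closed_segment (posn (Inl 1)) (posn (Inl 2)) \<inter> closed_segment (posn (Inr 0)) (posn (Inr 1)) \<subseteq> {}"
  "closed_segment (posn (Inl 1)) (posn (Inl 2)) \<inter> closed_segment (posn (Inr 1)) (posn (Inr 2)) \<subseteq> {}"
  "closed_segment (posn (Inl 1)) (posn (Inl 2)) \<inter> closed_segment (posn (Inl 0)) (posn (Inr 0)) \<subseteq> {}"
  "closed_segment (posn (Inl 1)) (posn (Inl 2)) \<inter> closed_segment (posn (Inl 0)) (posn (Inr 1)) \<subseteq> {}"
  "closed_segment (posn (Inl 1)) (posn (Inl 2)) \<inter> closed_segment (posn (Inl 0)) (posn (Inr 2)) \<subseteq> {}"
  "closed_segment (posn (Inl 1)) (posn (Inl 2)) \<inter> closed_segment (posn (Inl 1)) (posn (Inr 0)) \<subseteq> {(posn (Inl 1))}"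
  "closed_segment (posn (Inl 1)) (posn (Inl 2)) \<inter> closed_segment (posn (Inl 1)) (posn (Inr 1)) \<subseteq> {(posn (Inl 1))}"
  "closed_segment (posn (Inl 1)) (posn (Inl 2)) \<inter> closed_segment (posn (Inl 1)) (posn (Inr 2)) \<subseteq> {(posn (Inl 1))}"
  "closed_segment (posn (Inl 1)) (posn (Inl 2)) \<inter> closed_segment (posn (Inl 2)) (posn (Inr 0)) \<subseteq> {(posn (Inl 2))}"
  "closed_segment (posn (Inl 1)) (posn (Inl 2)) \<inter> closed_segment (posn (Inl 2)) (posn (Inr 1)) \<subseteq> {(posn (Inl 2))}"
  "closed_segment (posn (Inl 1)) (posn (Inl 2)) \<inter> closed_segment (posn (Inl 2)) (posn (Inr 2)) \<subseteq> {(posn (Inl 2))}"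
  "closed_segment (posn (Inl 2)) (posn (Inl 0)) \<inter> closed_segment (posn (Inr 0)) (posn (Inr 1)) \<subseteq> {}"
  "closed_segment (posn (Inl 2)) (posn (Inl 0)) \<inter> closed_segment (posn (Inr 1)) (posn (Inr 2)) \<subseteq> {Complex (-3/4) (-9/4)}"
  "closed_segment (posn (Inl 2)) (posn (Inl 0)) \<inter> closed_segment (posn (Inl 0)) (posn (Inr 0)) \<subseteq> {(posn (Inl 0))}"
  "closed_segment (posn (Inl 2)) (posn (Inl 0)) \<inter> closed_segment (posn (Inl 0)) (posn (Inr 1)) \<subseteq> {(posn (Inl 0))}"
  "closed_segment (posn (Inl 2)) (posn (Inl 0)) \<inter> closed_segment (posn (Inl 0)) (posn (Inr 2)) \<subseteq> {(posn (Inl 0))}"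
  "closed_segment (posn (Inl 2)) (posn (Inl 0)) \<inter> closed_segment (posn (Inl 1)) (posn (Inr 0)) \<subseteq> {}"
  "closed_segment (posn (Inl 2)) (posn (Inl 0)) \<inter> closed_segment (posn (Inl 1)) (posn (Inr 1)) \<subseteq> {}"
  "closed_segment (posn (Inl 2)) (posn (Inl 0)) \<inter> closed_segment (posn (Inl 1)) (posn (Inr 2)) \<subseteq> {}"
  "closed_segment (posn (Inl 2)) (posn (Inl 0)) \<inter> closed_segment (posn (Inl 2)) (posn (Inr 0)) \<subseteq> {(posn (Inl 2))}"
  "closed_segment (posn (Inl 2)) (posn (Inl 0)) \<inter> closed_segment (posn (Inl 2)) (posn (Inr 1)) \<subseteq> {(posn (Inl 2))}"
  "closed_segment (posn (Inl 2)) (posn (Inl 0)) \<inter> closed_segment (posn (Inl 2)) (posn (Inr 2)) \<subseteq> {(posn (Inl 2))}"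
  "closed_segment (posn (Inr 0)) (posn (Inr 1)) \<inter> closed_segment (posn (Inr 1)) (posn (Inr 2)) \<subseteq> {(posn (Inr 1))}"
  "closed_segment (posn (Inr 0)) (posn (Inr 1)) \<inter> closed_segment (posn (Inl 0)) (posn (Inr 0)) \<subseteq> {(posn (Inr 0))}"
  "closed_segment (posn (Inr 0)) (posn (Inr 1)) \<inter> closed_segment (posn (Inl 0)) (posn (Inr 1)) \<subseteq> {(posn (Inr 1))}"
  "closed_segment (posn (Inr 0)) (posn (Inr 1)) \<inter> closed_segment (posn (Inl 0)) (posn (Inr 2)) \<subseteq> {}"
  "closed_segment (posn (Inr 0)) (posn (Inr 1)) \<inter> closed_segment (posn (Inl 1)) (posn (Inr 0)) \<subseteq> {(posn (Inr 0))}"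
  "closed_segment (posn (Inr 0)) (posn (Inr 1)) \<inter> closed_segment (posn (Inl 1)) (posn (Inr 1)) \<subseteq> {(posn (Inr 1))}"
  "closed_segment (posn (Inr 0)) (posn (Inr 1)) \<inter> closed_segment (posn (Inl 1)) (posn (Inr 2)) \<subseteq> {}"
  "closed_segment (posn (Inr 0)) (posn (Inr 1)) \<inter> closed_segment (posn (Inl 2)) (posn (Inr 0)) \<subseteq> {(posn (Inr 0))}"
  "closed_segment (posn (Inr 0)) (posn (Inr 1)) \<inter> closed_segment (posn (Inl 2)) (posn (Inr 1)) \<subseteq> {(posn (Inr 1))}"
  "closed_segment (posn (Inr 0)) (posn (Inr 1)) \<inter> closed_segment (posn (Inl 2)) (posn (Inr 2)) \<subseteq> {}"
  "closed_segment (posn (Inr 1)) (posn (Inr 2)) \<inter> closed_segment (posn (Inl 0)) (posn (Inr 0)) \<subseteq> {}"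
  "closed_segment (posn (Inr 1)) (posn (Inr 2)) \<inter> closed_segment (posn (Inl 0)) (posn (Inr 1)) \<subseteq> {(posn (Inr 1))}"
  "closed_segment (posn (Inr 1)) (posn (Inr 2)) \<inter> closed_segment (posn (Inl 0)) (posn (Inr 2)) \<subseteq> {(posn (Inr 2))}"
  "closed_segment (posn (Inr 1)) (posn (Inr 2)) \<inter> closed_segment (posn (Inl 1)) (posn (Inr 0)) \<subseteq> {}"
  "closed_segment (posn (Inr 1)) (posn (Inr 2)) \<inter> closed_segment (posn (Inl 1)) (posn (Inr 1)) \<subseteq> {(posn (Inr 1))}"
  "closed_segment (posn (Inr 1)) (posn (Inr 2)) \<inter> closed_segment (posn (Inl 1)) (posn (Inr 2)) \<subseteq> {(posn (Inr 2))}"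
  "closed_segment (posn (Inr 1)) (posn (Inr 2)) \<inter> closed_segment (posn (Inl 2)) (posn (Inr 0)) \<subseteq> {}"
  "closed_segment (posn (Inr 1)) (posn (Inr 2)) \<inter> closed_segment (posn (Inl 2)) (posn (Inr 1)) \<subseteq> {(posn (Inr 1))}"
  "closed_segment (posn (Inr 1)) (posn (Inr 2)) \<inter> closed_segment (posn (Inl 2)) (posn (Inr 2)) \<subseteq> {(posn (Inr 2))}"
  "closed_segment (posn (Inl 0)) (posn (Inr 0)) \<inter> closed_segment (posn (Inl 0)) (posn (Inr 1)) \<subseteq> {(posn (Inl 0))}"
  "closed_segment (posn (Inl 0)) (posn (Inr 0)) \<inter> closed_segment (posn (Inl 0)) (posn (Inr 2)) \<subseteq> {(posn (Inl 0))}"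
  "closed_segment (posn (Inl 0)) (posn (Inr 0)) \<inter> closed_segment (posn (Inl 1)) (posn (Inr 0)) \<subseteq> {(posn (Inr 0))}"
  "closed_segment (posn (Inl 0)) (posn (Inr 0)) \<inter> closed_segment (posn (Inl 1)) (posn (Inr 1)) \<subseteq> {Complex (1/2) (-3/4)}"
  "closed_segment (posn (Inl 0)) (posn (Inr 0)) \<inter> closed_segment (posn (Inl 1)) (posn (Inr 2)) \<subseteq> {}"
  "closed_segment (posn (Inl 0)) (posn (Inr 0)) \<inter> closed_segment (posn (Inl 2)) (posn (Inr 0)) \<subseteq> {(posn (Inr 0))}"
  "closed_segment (posn (Inl 0)) (posn (Inr 0)) \<inter> closed_segment (posn (Inl 2)) (posn (Inr 1)) \<subseteq> {}"
  "closed_segment (posn (Inl 0)) (posn (Inr 0)) \<inter> closed_segment (posn (Inl 2)) (posn (Inr 2)) \<subseteq> {}"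
  "closed_segment (posn (Inl 0)) (posn (Inr 1)) \<inter> closed_segment (posn (Inl 0)) (posn (Inr 2)) \<subseteq> {(posn (Inl 0))}"
  "closed_segment (posn (Inl 0)) (posn (Inr 1)) \<inter> closed_segment (posn (Inl 1)) (posn (Inr 0)) \<subseteq> {}"
  "closed_segment (posn (Inl 0)) (posn (Inr 1)) \<inter> closed_segment (posn (Inl 1)) (posn (Inr 1)) \<subseteq> {(posn (Inr 1))}"
  "closed_segment (posn (Inl 0)) (posn (Inr 1)) \<inter> closed_segment (posn (Inl 1)) (posn (Inr 2)) \<subseteq> {}"
  "closed_segment (posn (Inl 0)) (posn (Inr 1)) \<inter> closed_segment (posn (Inl 2)) (posn (Inr 0)) \<subseteq> {}"
  "closed_segment (posn (Inl 0)) (posn (Inr 1)) \<inter> closed_segment (posn (Inl 2)) (posn (Inr 1)) \<subseteq> {(posn (Inr 1))}"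
  "closed_segment (posn (Inl 0)) (posn (Inr 1)) \<inter> closed_segment (posn (Inl 2)) (posn (Inr 2)) \<subseteq> {}"
  "closed_segment (posn (Inl 0)) (posn (Inr 2)) \<inter> closed_segment (posn (Inl 1)) (posn (Inr 0)) \<subseteq> {}"
  "closed_segment (posn (Inl 0)) (posn (Inr 2)) \<inter> closed_segment (posn (Inl 1)) (posn (Inr 1)) \<subseteq> {}"
  "closed_segment (posn (Inl 0)) (posn (Inr 2)) \<inter> closed_segment (posn (Inl 1)) (posn (Inr 2)) \<subseteq> {(posn (Inr 2))}"
  "closed_segment (posn (Inl 0)) (posn (Inr 2)) \<inter> closed_segment (posn (Inl 2)) (posn (Inr 0)) \<subseteq> {}"
  "closed_segment (posn (Inl 0)) (posn (Inr 2)) \<inter> closed_segment (posn (Inl 2)) (posn (Inr 1)) \<subseteq> {}"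
  "closed_segment (posn (Inl 0)) (posn (Inr 2)) \<inter> closed_segment (posn (Inl 2)) (posn (Inr 2)) \<subseteq> {(posn (Inr 2))}"
  "closed_segment (posn (Inl 1)) (posn (Inr 0)) \<inter> closed_segment (posn (Inl 1)) (posn (Inr 1)) \<subseteq> {(posn (Inl 1))}"
  "closed_segment (posn (Inl 1)) (posn (Inr 0)) \<inter> closed_segment (posn (Inl 1)) (posn (Inr 2)) \<subseteq> {(posn (Inl 1))}"
  "closed_segment (posn (Inl 1)) (posn (Inr 0)) \<inter> closed_segment (posn (Inl 2)) (posn (Inr 0)) \<subseteq> {(posn (Inr 0))}"
  "closed_segment (posn (Inl 1)) (posn (Inr 0)) \<inter> closed_segment (posn (Inl 2)) (posn (Inr 1)) \<subseteq> {}"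
  "closed_segment (posn (Inl 1)) (posn (Inr 0)) \<inter> closed_segment (posn (Inl 2)) (posn (Inr 2)) \<subseteq> {}"
  "closed_segment (posn (Inl 1)) (posn (Inr 1)) \<inter> closed_segment (posn (Inl 1)) (posn (Inr 2)) \<subseteq> {(posn (Inl 1))}"
  "closed_segment (posn (Inl 1)) (posn (Inr 1)) \<inter> closed_segment (posn (Inl 2)) (posn (Inr 0)) \<subseteq> {}"
  "closed_segment (posn (Inl 1)) (posn (Inr 1)) \<inter> closed_segment (posn (Inl 2)) (posn (Inr 1)) \<subseteq> {(posn (Inr 1))}"
  "closed_segment (posn (Inl 1)) (posn (Inr 1)) \<inter> closed_segment (posn (Inl 2)) (posn (Inr 2)) \<subseteq> {}"
  "closed_segment (posn (Inl 1)) (posn (Inr 2)) \<inter> closed_segment (posn (Inl 2)) (posn (Inr 0)) \<subseteq> {}"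
  "closed_segment (posn (Inl 1)) (posn (Inr 2)) \<inter> closed_segment (posn (Inl 2)) (posn (Inr 1)) \<subseteq> {}"
  "closed_segment (posn (Inl 1)) (posn (Inr 2)) \<inter> closed_segment (posn (Inl 2)) (posn (Inr 2)) \<subseteq> {(posn (Inr 2))}"
  "closed_segment (posn (Inl 2)) (posn (Inr 0)) \<inter> closed_segment (posn (Inl 2)) (posn (Inr 1)) \<subseteq> {(posn (Inl 2))}"
  "closed_segment (posn (Inl 2)) (posn (Inr 0)) \<inter> closed_segment (posn (Inl 2)) (posn (Inr 2)) \<subseteq> {(posn (Inl 2))}"
  "closed_segment (posn (Inl 2)) (posn (Inr 1)) \<inter> closed_segment (posn (Inl 2)) (posn (Inr 2)) \<subseteq> {(posn (Inl 2))}"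
  by (auto simp: posn_def in_seg_iff complex_eq_iff)

lemma EIp0: "cr {Inl 0, Inl 1} {Inl 1, Inl 2} = {}"
  using segpairs(1) by (auto simp: cr_def EI_doubleton)

lemma EIp1: "cr {Inl 0, Inl 1} {Inl 2, Inl 0} = {}"
  using segpairs(2) by (auto simp: cr_def EI_doubleton)

lemma EIp2: "cr {Inl 0, Inl 1} {Inr 0, Inr 1} = {}"
  using segpairs(3) by (auto simp: cr_def EI_doubleton)

lemma EIp3: "cr {Inl 0, Inl 1} {Inr 1, Inr 2} = {}"
  using segpairs(4) by (auto simp: cr_def EI_doubleton)

lemma EIp4: "cr {Inl 0, Inl 1} {Inl 0, Inr 0} = {}"
  using segpairs(5) by (auto simp: cr_def EI_doubleton)

lemma EIp5: "cr {Inl 0, Inl 1} {Inl 0, Inr 1} = {}"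
  using segpairs(6) by (auto simp: cr_def EI_doubleton)

lemma EIp6: "cr {Inl 0, Inl 1} {Inl 0, Inr 2} = {}"
  using segpairs(7) by (auto simp: cr_def EI_doubleton)

lemma EIp7: "cr {Inl 0, Inl 1} {Inl 1, Inr 0} = {}"
  using segpairs(8) by (auto simp: cr_def EI_doubleton)

lemma EIp8: "cr {Inl 0, Inl 1} {Inl 1, Inr 1} = {}"
  using segpairs(9) by (auto simp: cr_def EI_doubleton)

lemma EIp9: "cr {Inl 0, Inl 1} {Inl 1, Inr 2} = {}"
  using segpairs(10) by (auto simp: cr_def EI_doubleton)

lemma EIp10: "cr {Inl 0, Inl 1} {Inl 2, Inr 0} = {}"
  using segpairs(11) by (auto simp: cr_def EI_doubleton)

lemma EIp11: "cr {Inl 0, Inl 1} {Inl 2, Inr 1} = {}"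
  using segpairs(12) by (auto simp: cr_def EI_doubleton)

lemma EIp12: "cr {Inl 0, Inl 1} {Inl 2, Inr 2} = {}"
  using segpairs(13) by (auto simp: cr_def EI_doubleton)

lemma EIp13: "cr {Inl 1, Inl 2} {Inl 0, Inl 1} = {}"
  using segpairs(1) by (auto simp: cr_def EI_doubleton)

lemma EIp14: "cr {Inl 1, Inl 2} {Inl 2, Inl 0} = {}"
  using segpairs(14) by (auto simp: cr_def EI_doubleton)

lemma EIp15: "cr {Inl 1, Inl 2} {Inr 0, Inr 1} = {}"
  using segpairs(15) by (auto simp: cr_def EI_doubleton)

lemma EIp16: "cr {Inl 1, Inl 2} {Inr 1, Inr 2} = {}"
  using segpairs(16) by (auto simp: cr_def EI_doubleton)

lemma EIp17: "cr {Inl 1, Inl 2} {Inl 0, Inr 0} = {}"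
  using segpairs(17) by (auto simp: cr_def EI_doubleton)

lemma EIp18: "cr {Inl 1, Inl 2} {Inl 0, Inr 1} = {}"
  using segpairs(18) by (auto simp: cr_def EI_doubleton)

lemma EIp19: "cr {Inl 1, Inl 2} {Inl 0, Inr 2} = {}"
  using segpairs(19) by (auto simp: cr_def EI_doubleton)

lemma EIp20: "cr {Inl 1, Inl 2} {Inl 1, Inr 0} = {}"
  using segpairs(20) by (auto simp: cr_def EI_doubleton)

lemma EIp21: "cr {Inl 1, Inl 2} {Inl 1, Inr 1} = {}"
  using segpairs(21) by (auto simp: cr_def EI_doubleton)

lemma EIp22: "cr {Inl 1, Inl 2} {Inl 1, Inr 2} = {}"
  using segpairs(22) by (auto simp: cr_def EI_doubleton)

lemma EIp23: "cr {Inl 1, Inl 2} {Inl 2, Inr 0} = {}"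
  using segpairs(23) by (auto simp: cr_def EI_doubleton)

lemma EIp24: "cr {Inl 1, Inl 2} {Inl 2, Inr 1} = {}"
  using segpairs(24) by (auto simp: cr_def EI_doubleton)

lemma EIp25: "cr {Inl 1, Inl 2} {Inl 2, Inr 2} = {}"
  using segpairs(25) by (auto simp: cr_def EI_doubleton)

lemma EIp26: "cr {Inl 2, Inl 0} {Inl 0, Inl 1} = {}"
  using segpairs(2) by (auto simp: cr_def EI_doubleton)

lemma EIp27: "cr {Inl 2, Inl 0} {Inl 1, Inl 2} = {}"
  using segpairs(14) by (auto simp: cr_def EI_doubleton)

lemma EIp28: "cr {Inl 2, Inl 0} {Inr 0, Inr 1} = {}"
  using segpairs(26) by (auto simp: cr_def EI_doubleton)

lemma EIc29: "cr {Inl 2, Inl 0} {Inr 1, Inr 2} \<subseteq> {Complex (-3/4) (-9/4)}"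
  using segpairs(27) by (auto simp: cr_def EI_doubleton)

lemma EIp30: "cr {Inl 2, Inl 0} {Inl 0, Inr 0} = {}"
  using segpairs(28) by (auto simp: cr_def EI_doubleton)

lemma EIp31: "cr {Inl 2, Inl 0} {Inl 0, Inr 1} = {}"
  using segpairs(29) by (auto simp: cr_def EI_doubleton)

lemma EIp32: "cr {Inl 2, Inl 0} {Inl 0, Inr 2} = {}"
  using segpairs(30) by (auto simp: cr_def EI_doubleton)

lemma EIp33: "cr {Inl 2, Inl 0} {Inl 1, Inr 0} = {}"
  using segpairs(31) by (auto simp: cr_def EI_doubleton)

lemma EIp34: "cr {Inl 2, Inl 0} {Inl 1, Inr 1} = {}"
  using segpairs(32) by (auto simp: cr_def EI_doubleton)

lemma EIp35: "cr {Inl 2, Inl 0} {Inl 1, Inr 2} = {}"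
  using segpairs(33) by (auto simp: cr_def EI_doubleton)

lemma EIp36: "cr {Inl 2, Inl 0} {Inl 2, Inr 0} = {}"
  using segpairs(34) by (auto simp: cr_def EI_doubleton)

lemma EIp37: "cr {Inl 2, Inl 0} {Inl 2, Inr 1} = {}"
  using segpairs(35) by (auto simp: cr_def EI_doubleton)

lemma EIp38: "cr {Inl 2, Inl 0} {Inl 2, Inr 2} = {}"
  using segpairs(36) by (auto simp: cr_def EI_doubleton)

lemma EIp39: "cr {Inr 0, Inr 1} {Inl 0, Inl 1} = {}"
  using segpairs(3) by (auto simp: cr_def EI_doubleton)

lemma EIp40: "cr {Inr 0, Inr 1} {Inl 1, Inl 2} = {}"
  using segpairs(15) by (auto simp: cr_def EI_doubleton)

lemma EIp41: "cr {Inr 0, Inr 1} {Inl 2, Inl 0} = {}"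
  using segpairs(26) by (auto simp: cr_def EI_doubleton)

lemma EIp42: "cr {Inr 0, Inr 1} {Inr 1, Inr 2} = {}"
  using segpairs(37) by (auto simp: cr_def EI_doubleton)

lemma EIp43: "cr {Inr 0, Inr 1} {Inl 0, Inr 0} = {}"
  using segpairs(38) by (auto simp: cr_def EI_doubleton)

lemma EIp44: "cr {Inr 0, Inr 1} {Inl 0, Inr 1} = {}"
  using segpairs(39) by (auto simp: cr_def EI_doubleton)

lemma EIp45: "cr {Inr 0, Inr 1} {Inl 0, Inr 2} = {}"
  using segpairs(40) by (auto simp: cr_def EI_doubleton)

lemma EIp46: "cr {Inr 0, Inr 1} {Inl 1, Inr 0} = {}"
  using segpairs(41) by (auto simp: cr_def EI_doubleton)

lemma EIp47: "cr {Inr 0, Inr 1} {Inl 1, Inr 1} = {}"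
  using segpairs(42) by (auto simp: cr_def EI_doubleton)

lemma EIp48: "cr {Inr 0, Inr 1} {Inl 1, Inr 2} = {}"
  using segpairs(43) by (auto simp: cr_def EI_doubleton)

lemma EIp49: "cr {Inr 0, Inr 1} {Inl 2, Inr 0} = {}"
  using segpairs(44) by (auto simp: cr_def EI_doubleton)

lemma EIp50: "cr {Inr 0, Inr 1} {Inl 2, Inr 1} = {}"
  using segpairs(45) by (auto simp: cr_def EI_doubleton)

lemma EIp51: "cr {Inr 0, Inr 1} {Inl 2, Inr 2} = {}"
  using segpairs(46) by (auto simp: cr_def EI_doubleton)

lemma EIp52: "cr {Inr 1, Inr 2} {Inl 0, Inl 1} = {}"
  using segpairs(4) by (auto simp: cr_def EI_doubleton)

lemma EIp53: "cr {Inr 1, Inr 2} {Inl 1, Inl 2} = {}"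
  using segpairs(16) by (auto simp: cr_def EI_doubleton)

lemma EIc54: "cr {Inr 1, Inr 2} {Inl 2, Inl 0} \<subseteq> {Complex (-3/4) (-9/4)}"
  using segpairs(27) by (auto simp: cr_def EI_doubleton)

lemma EIp55: "cr {Inr 1, Inr 2} {Inr 0, Inr 1} = {}"
  using segpairs(37) by (auto simp: cr_def EI_doubleton)

lemma EIp56: "cr {Inr 1, Inr 2} {Inl 0, Inr 0} = {}"
  using segpairs(47) by (auto simp: cr_def EI_doubleton)

lemma EIp57: "cr {Inr 1, Inr 2} {Inl 0, Inr 1} = {}"
  using segpairs(48) by (auto simp: cr_def EI_doubleton)

lemma EIp58: "cr {Inr 1, Inr 2} {Inl 0, Inr 2} = {}"
  using segpairs(49) by (auto simp: cr_def EI_doubleton)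

lemma EIp59: "cr {Inr 1, Inr 2} {Inl 1, Inr 0} = {}"
  using segpairs(50) by (auto simp: cr_def EI_doubleton)

lemma EIp60: "cr {Inr 1, Inr 2} {Inl 1, Inr 1} = {}"
  using segpairs(51) by (auto simp: cr_def EI_doubleton)

lemma EIp61: "cr {Inr 1, Inr 2} {Inl 1, Inr 2} = {}"
  using segpairs(52) by (auto simp: cr_def EI_doubleton)

lemma EIp62: "cr {Inr 1, Inr 2} {Inl 2, Inr 0} = {}"
  using segpairs(53) by (auto simp: cr_def EI_doubleton)

lemma EIp63: "cr {Inr 1, Inr 2} {Inl 2, Inr 1} = {}"
  using segpairs(54) by (auto simp: cr_def EI_doubleton)

lemma EIp64: "cr {Inr 1, Inr 2} {Inl 2, Inr 2} = {}"
  using segpairs(55) by (auto simp: cr_def EI_doubleton)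

lemma EIp65: "cr {Inl 0, Inr 0} {Inl 0, Inl 1} = {}"
  using segpairs(5) by (auto simp: cr_def EI_doubleton)

lemma EIp66: "cr {Inl 0, Inr 0} {Inl 1, Inl 2} = {}"
  using segpairs(17) by (auto simp: cr_def EI_doubleton)

lemma EIp67: "cr {Inl 0, Inr 0} {Inl 2, Inl 0} = {}"
  using segpairs(28) by (auto simp: cr_def EI_doubleton)

lemma EIp68: "cr {Inl 0, Inr 0} {Inr 0, Inr 1} = {}"
  using segpairs(38) by (auto simp: cr_def EI_doubleton)

lemma EIp69: "cr {Inl 0, Inr 0} {Inr 1, Inr 2} = {}"
  using segpairs(47) by (auto simp: cr_def EI_doubleton)

lemma EIp70: "cr {Inl 0, Inr 0} {Inl 0, Inr 1} = {}"
  using segpairs(56) by (auto simp: cr_def EI_doubleton)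

lemma EIp71: "cr {Inl 0, Inr 0} {Inl 0, Inr 2} = {}"
  using segpairs(57) by (auto simp: cr_def EI_doubleton)

lemma EIp72: "cr {Inl 0, Inr 0} {Inl 1, Inr 0} = {}"
  using segpairs(58) by (auto simp: cr_def EI_doubleton)

lemma EIc73: "cr {Inl 0, Inr 0} {Inl 1, Inr 1} \<subseteq> {Complex (1/2) (-3/4)}"
  using segpairs(59) by (auto simp: cr_def EI_doubleton)

lemma EIp74: "cr {Inl 0, Inr 0} {Inl 1, Inr 2} = {}"
  using segpairs(60) by (auto simp: cr_def EI_doubleton)

lemma EIp75: "cr {Inl 0, Inr 0} {Inl 2, Inr 0} = {}"
  using segpairs(61) by (auto simp: cr_def EI_doubleton)

lemma EIp76: "cr {Inl 0, Inr 0} {Inl 2, Inr 1} = {}"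
  using segpairs(62) by (auto simp: cr_def EI_doubleton)

lemma EIp77: "cr {Inl 0, Inr 0} {Inl 2, Inr 2} = {}"
  using segpairs(63) by (auto simp: cr_def EI_doubleton)

lemma EIp78: "cr {Inl 0, Inr 1} {Inl 0, Inl 1} = {}"
  using segpairs(6) by (auto simp: cr_def EI_doubleton)

lemma EIp79: "cr {Inl 0, Inr 1} {Inl 1, Inl 2} = {}"
  using segpairs(18) by (auto simp: cr_def EI_doubleton)

lemma EIp80: "cr {Inl 0, Inr 1} {Inl 2, Inl 0} = {}"
  using segpairs(29) by (auto simp: cr_def EI_doubleton)

lemma EIp81: "cr {Inl 0, Inr 1} {Inr 0, Inr 1} = {}"
  using segpairs(39) by (auto simp: cr_def EI_doubleton)

lemma EIp82: "cr {Inl 0, Inr 1} {Inr 1, Inr 2} = {}"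
  using segpairs(48) by (auto simp: cr_def EI_doubleton)

lemma EIp83: "cr {Inl 0, Inr 1} {Inl 0, Inr 0} = {}"
  using segpairs(56) by (auto simp: cr_def EI_doubleton)

lemma EIp84: "cr {Inl 0, Inr 1} {Inl 0, Inr 2} = {}"
  using segpairs(64) by (auto simp: cr_def EI_doubleton)

lemma EIp85: "cr {Inl 0, Inr 1} {Inl 1, Inr 0} = {}"
  using segpairs(65) by (auto simp: cr_def EI_doubleton)

lemma EIp86: "cr {Inl 0, Inr 1} {Inl 1, Inr 1} = {}"
  using segpairs(66) by (auto simp: cr_def EI_doubleton)

lemma EIp87: "cr {Inl 0, Inr 1} {Inl 1, Inr 2} = {}"
  using segpairs(67) by (auto simp: cr_def EI_doubleton)

lemma EIp88: "cr {Inl 0, Inr 1} {Inl 2, Inr 0} = {}"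
  using segpairs(68) by (auto simp: cr_def EI_doubleton)

lemma EIp89: "cr {Inl 0, Inr 1} {Inl 2, Inr 1} = {}"
  using segpairs(69) by (auto simp: cr_def EI_doubleton)

lemma EIp90: "cr {Inl 0, Inr 1} {Inl 2, Inr 2} = {}"
  using segpairs(70) by (auto simp: cr_def EI_doubleton)

lemma EIp91: "cr {Inl 0, Inr 2} {Inl 0, Inl 1} = {}"
  using segpairs(7) by (auto simp: cr_def EI_doubleton)

lemma EIp92: "cr {Inl 0, Inr 2} {Inl 1, Inl 2} = {}"
  using segpairs(19) by (auto simp: cr_def EI_doubleton)

lemma EIp93: "cr {Inl 0, Inr 2} {Inl 2, Inl 0} = {}"
  using segpairs(30) by (auto simp: cr_def EI_doubleton)

lemma EIp94: "cr {Inl 0, Inr 2} {Inr 0, Inr 1} = {}"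
  using segpairs(40) by (auto simp: cr_def EI_doubleton)

lemma EIp95: "cr {Inl 0, Inr 2} {Inr 1, Inr 2} = {}"
  using segpairs(49) by (auto simp: cr_def EI_doubleton)

lemma EIp96: "cr {Inl 0, Inr 2} {Inl 0, Inr 0} = {}"
  using segpairs(57) by (auto simp: cr_def EI_doubleton)

lemma EIp97: "cr {Inl 0, Inr 2} {Inl 0, Inr 1} = {}"
  using segpairs(64) by (auto simp: cr_def EI_doubleton)

lemma EIp98: "cr {Inl 0, Inr 2} {Inl 1, Inr 0} = {}"
  using segpairs(71) by (auto simp: cr_def EI_doubleton)

lemma EIp99: "cr {Inl 0, Inr 2} {Inl 1, Inr 1} = {}"
  using segpairs(72) by (auto simp: cr_def EI_doubleton)

lemma EIp100: "cr {Inl 0, Inr 2} {Inl 1, Inr 2} = {}"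
  using segpairs(73) by (auto simp: cr_def EI_doubleton)

lemma EIp101: "cr {Inl 0, Inr 2} {Inl 2, Inr 0} = {}"
  using segpairs(74) by (auto simp: cr_def EI_doubleton)

lemma EIp102: "cr {Inl 0, Inr 2} {Inl 2, Inr 1} = {}"
  using segpairs(75) by (auto simp: cr_def EI_doubleton)

lemma EIp103: "cr {Inl 0, Inr 2} {Inl 2, Inr 2} = {}"
  using segpairs(76) by (auto simp: cr_def EI_doubleton)

lemma EIp104: "cr {Inl 1, Inr 0} {Inl 0, Inl 1} = {}"
  using segpairs(8) by (auto simp: cr_def EI_doubleton)

lemma EIp105: "cr {Inl 1, Inr 0} {Inl 1, Inl 2} = {}"
  using segpairs(20) by (auto simp: cr_def EI_doubleton)

lemma EIp106: "cr {Inl 1, Inr 0} {Inl 2, Inl 0} = {}"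
  using segpairs(31) by (auto simp: cr_def EI_doubleton)

lemma EIp107: "cr {Inl 1, Inr 0} {Inr 0, Inr 1} = {}"
  using segpairs(41) by (auto simp: cr_def EI_doubleton)

lemma EIp108: "cr {Inl 1, Inr 0} {Inr 1, Inr 2} = {}"
  using segpairs(50) by (auto simp: cr_def EI_doubleton)

lemma EIp109: "cr {Inl 1, Inr 0} {Inl 0, Inr 0} = {}"
  using segpairs(58) by (auto simp: cr_def EI_doubleton)

lemma EIp110: "cr {Inl 1, Inr 0} {Inl 0, Inr 1} = {}"
  using segpairs(65) by (auto simp: cr_def EI_doubleton)

lemma EIp111: "cr {Inl 1, Inr 0} {Inl 0, Inr 2} = {}"
  using segpairs(71) by (auto simp: cr_def EI_doubleton)

lemma EIp112: "cr {Inl 1, Inr 0} {Inl 1, Inr 1} = {}"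
  using segpairs(77) by (auto simp: cr_def EI_doubleton)

lemma EIp113: "cr {Inl 1, Inr 0} {Inl 1, Inr 2} = {}"
  using segpairs(78) by (auto simp: cr_def EI_doubleton)

lemma EIp114: "cr {Inl 1, Inr 0} {Inl 2, Inr 0} = {}"
  using segpairs(79) by (auto simp: cr_def EI_doubleton)

lemma EIp115: "cr {Inl 1, Inr 0} {Inl 2, Inr 1} = {}"
  using segpairs(80) by (auto simp: cr_def EI_doubleton)

lemma EIp116: "cr {Inl 1, Inr 0} {Inl 2, Inr 2} = {}"
  using segpairs(81) by (auto simp: cr_def EI_doubleton)

lemma EIp117: "cr {Inl 1, Inr 1} {Inl 0, Inl 1} = {}"
  using segpairs(9) by (auto simp: cr_def EI_doubleton)

lemma EIp118: "cr {Inl 1, Inr 1} {Inl 1, Inl 2} = {}"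
  using segpairs(21) by (auto simp: cr_def EI_doubleton)

lemma EIp119: "cr {Inl 1, Inr 1} {Inl 2, Inl 0} = {}"
  using segpairs(32) by (auto simp: cr_def EI_doubleton)

lemma EIp120: "cr {Inl 1, Inr 1} {Inr 0, Inr 1} = {}"
  using segpairs(42) by (auto simp: cr_def EI_doubleton)

lemma EIp121: "cr {Inl 1, Inr 1} {Inr 1, Inr 2} = {}"
  using segpairs(51) by (auto simp: cr_def EI_doubleton)

lemma EIc122: "cr {Inl 1, Inr 1} {Inl 0, Inr 0} \<subseteq> {Complex (1/2) (-3/4)}"
  using segpairs(59) by (auto simp: cr_def EI_doubleton)

lemma EIp123: "cr {Inl 1, Inr 1} {Inl 0, Inr 1} = {}"
  using segpairs(66) by (auto simp: cr_def EI_doubleton)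

lemma EIp124: "cr {Inl 1, Inr 1} {Inl 0, Inr 2} = {}"
  using segpairs(72) by (auto simp: cr_def EI_doubleton)

lemma EIp125: "cr {Inl 1, Inr 1} {Inl 1, Inr 0} = {}"
  using segpairs(77) by (auto simp: cr_def EI_doubleton)

lemma EIp126: "cr {Inl 1, Inr 1} {Inl 1, Inr 2} = {}"
  using segpairs(82) by (auto simp: cr_def EI_doubleton)

lemma EIp127: "cr {Inl 1, Inr 1} {Inl 2, Inr 0} = {}"
  using segpairs(83) by (auto simp: cr_def EI_doubleton)

lemma EIp128: "cr {Inl 1, Inr 1} {Inl 2, Inr 1} = {}"
  using segpairs(84) by (auto simp: cr_def EI_doubleton)

lemma EIp129: "cr {Inl 1, Inr 1} {Inl 2, Inr 2} = {}"
  using segpairs(85) by (auto simp: cr_def EI_doubleton)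

lemma EIp130: "cr {Inl 1, Inr 2} {Inl 0, Inl 1} = {}"
  using segpairs(10) by (auto simp: cr_def EI_doubleton)

lemma EIp131: "cr {Inl 1, Inr 2} {Inl 1, Inl 2} = {}"
  using segpairs(22) by (auto simp: cr_def EI_doubleton)

lemma EIp132: "cr {Inl 1, Inr 2} {Inl 2, Inl 0} = {}"
  using segpairs(33) by (auto simp: cr_def EI_doubleton)

lemma EIp133: "cr {Inl 1, Inr 2} {Inr 0, Inr 1} = {}"
  using segpairs(43) by (auto simp: cr_def EI_doubleton)

lemma EIp134: "cr {Inl 1, Inr 2} {Inr 1, Inr 2} = {}"
  using segpairs(52) by (auto simp: cr_def EI_doubleton)

lemma EIp135: "cr {Inl 1, Inr 2} {Inl 0, Inr 0} = {}"
  using segpairs(60) by (auto simp: cr_def EI_doubleton)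

lemma EIp136: "cr {Inl 1, Inr 2} {Inl 0, Inr 1} = {}"
  using segpairs(67) by (auto simp: cr_def EI_doubleton)

lemma EIp137: "cr {Inl 1, Inr 2} {Inl 0, Inr 2} = {}"
  using segpairs(73) by (auto simp: cr_def EI_doubleton)

lemma EIp138: "cr {Inl 1, Inr 2} {Inl 1, Inr 0} = {}"
  using segpairs(78) by (auto simp: cr_def EI_doubleton)

lemma EIp139: "cr {Inl 1, Inr 2} {Inl 1, Inr 1} = {}"
  using segpairs(82) by (auto simp: cr_def EI_doubleton)

lemma EIp140: "cr {Inl 1, Inr 2} {Inl 2, Inr 0} = {}"
  using segpairs(86) by (auto simp: cr_def EI_doubleton)

lemma EIp141: "cr {Inl 1, Inr 2} {Inl 2, Inr 1} = {}"
  using segpairs(87) by (auto simp: cr_def EI_doubleton)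

lemma EIp142: "cr {Inl 1, Inr 2} {Inl 2, Inr 2} = {}"
  using segpairs(88) by (auto simp: cr_def EI_doubleton)

lemma EIp143: "cr {Inl 2, Inr 0} {Inl 0, Inl 1} = {}"
  using segpairs(11) by (auto simp: cr_def EI_doubleton)

lemma EIp144: "cr {Inl 2, Inr 0} {Inl 1, Inl 2} = {}"
  using segpairs(23) by (auto simp: cr_def EI_doubleton)

lemma EIp145: "cr {Inl 2, Inr 0} {Inl 2, Inl 0} = {}"
  using segpairs(34) by (auto simp: cr_def EI_doubleton)

lemma EIp146: "cr {Inl 2, Inr 0} {Inr 0, Inr 1} = {}"
  using segpairs(44) by (auto simp: cr_def EI_doubleton)

lemma EIp147: "cr {Inl 2, Inr 0} {Inr 1, Inr 2} = {}"
  using segpairs(53) by (auto simp: cr_def EI_doubleton)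

lemma EIp148: "cr {Inl 2, Inr 0} {Inl 0, Inr 0} = {}"
  using segpairs(61) by (auto simp: cr_def EI_doubleton)

lemma EIp149: "cr {Inl 2, Inr 0} {Inl 0, Inr 1} = {}"
  using segpairs(68) by (auto simp: cr_def EI_doubleton)

lemma EIp150: "cr {Inl 2, Inr 0} {Inl 0, Inr 2} = {}"
  using segpairs(74) by (auto simp: cr_def EI_doubleton)

lemma EIp151: "cr {Inl 2, Inr 0} {Inl 1, Inr 0} = {}"
  using segpairs(79) by (auto simp: cr_def EI_doubleton)

lemma EIp152: "cr {Inl 2, Inr 0} {Inl 1, Inr 1} = {}"
  using segpairs(83) by (auto simp: cr_def EI_doubleton)

lemma EIp153: "cr {Inl 2, Inr 0} {Inl 1, Inr 2} = {}"
  using segpairs(86) by (auto simp: cr_def EI_doubleton)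

lemma EIp154: "cr {Inl 2, Inr 0} {Inl 2, Inr 1} = {}"
  using segpairs(89) by (auto simp: cr_def EI_doubleton)

lemma EIp155: "cr {Inl 2, Inr 0} {Inl 2, Inr 2} = {}"
  using segpairs(90) by (auto simp: cr_def EI_doubleton)

lemma EIp156: "cr {Inl 2, Inr 1} {Inl 0, Inl 1} = {}"
  using segpairs(12) by (auto simp: cr_def EI_doubleton)

lemma EIp157: "cr {Inl 2, Inr 1} {Inl 1, Inl 2} = {}"
  using segpairs(24) by (auto simp: cr_def EI_doubleton)

lemma EIp158: "cr {Inl 2, Inr 1} {Inl 2, Inl 0} = {}"
  using segpairs(35) by (auto simp: cr_def EI_doubleton)

lemma EIp159: "cr {Inl 2, Inr 1} {Inr 0, Inr 1} = {}"
  using segpairs(45) by (auto simp: cr_def EI_doubleton)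

lemma EIp160: "cr {Inl 2, Inr 1} {Inr 1, Inr 2} = {}"
  using segpairs(54) by (auto simp: cr_def EI_doubleton)

lemma EIp161: "cr {Inl 2, Inr 1} {Inl 0, Inr 0} = {}"
  using segpairs(62) by (auto simp: cr_def EI_doubleton)

lemma EIp162: "cr {Inl 2, Inr 1} {Inl 0, Inr 1} = {}"
  using segpairs(69) by (auto simp: cr_def EI_doubleton)

lemma EIp163: "cr {Inl 2, Inr 1} {Inl 0, Inr 2} = {}"
  using segpairs(75) by (auto simp: cr_def EI_doubleton)

lemma EIp164: "cr {Inl 2, Inr 1} {Inl 1, Inr 0} = {}"
  using segpairs(80) by (auto simp: cr_def EI_doubleton)

lemma EIp165: "cr {Inl 2, Inr 1} {Inl 1, Inr 1} = {}"
  using segpairs(84) by (auto simp: cr_def EI_doubleton)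

lemma EIp166: "cr {Inl 2, Inr 1} {Inl 1, Inr 2} = {}"
  using segpairs(87) by (auto simp: cr_def EI_doubleton)

lemma EIp167: "cr {Inl 2, Inr 1} {Inl 2, Inr 0} = {}"
  using segpairs(89) by (auto simp: cr_def EI_doubleton)

lemma EIp168: "cr {Inl 2, Inr 1} {Inl 2, Inr 2} = {}"
  using segpairs(91) by (auto simp: cr_def EI_doubleton)

lemma EIp169: "cr {Inl 2, Inr 2} {Inl 0, Inl 1} = {}"
  using segpairs(13) by (auto simp: cr_def EI_doubleton)

lemma EIp170: "cr {Inl 2, Inr 2} {Inl 1, Inl 2} = {}"
  using segpairs(25) by (auto simp: cr_def EI_doubleton)

lemma EIp171: "cr {Inl 2, Inr 2} {Inl 2, Inl 0} = {}"
  using segpairs(36) by (auto simp: cr_def EI_doubleton)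

lemma EIp172: "cr {Inl 2, Inr 2} {Inr 0, Inr 1} = {}"
  using segpairs(46) by (auto simp: cr_def EI_doubleton)

lemma EIp173: "cr {Inl 2, Inr 2} {Inr 1, Inr 2} = {}"
  using segpairs(55) by (auto simp: cr_def EI_doubleton)

lemma EIp174: "cr {Inl 2, Inr 2} {Inl 0, Inr 0} = {}"
  using segpairs(63) by (auto simp: cr_def EI_doubleton)

lemma EIp175: "cr {Inl 2, Inr 2} {Inl 0, Inr 1} = {}"
  using segpairs(70) by (auto simp: cr_def EI_doubleton)

lemma EIp176: "cr {Inl 2, Inr 2} {Inl 0, Inr 2} = {}"
  using segpairs(76) by (auto simp: cr_def EI_doubleton)

lemma EIp177: "cr {Inl 2, Inr 2} {Inl 1, Inr 0} = {}"
  using segpairs(81) by (auto simp: cr_def EI_doubleton)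

lemma EIp178: "cr {Inl 2, Inr 2} {Inl 1, Inr 1} = {}"
  using segpairs(85) by (auto simp: cr_def EI_doubleton)

lemma EIp179: "cr {Inl 2, Inr 2} {Inl 1, Inr 2} = {}"
  using segpairs(88) by (auto simp: cr_def EI_doubleton)

lemma EIp180: "cr {Inl 2, Inr 2} {Inl 2, Inr 0} = {}"
  using segpairs(90) by (auto simp: cr_def EI_doubleton)

lemma EIp181: "cr {Inl 2, Inr 2} {Inl 2, Inr 1} = {}"
  using segpairs(91) by (auto simp: cr_def EI_doubleton)

lemmas EIpairs = EIp0 EIp1 EIp2 EIp3 EIp4 EIp5 EIp6 EIp7 EIp8 EIp9 EIp10 EIp11 EIp12 EIp13 EIp14 EIp15 EIp16 EIp17 EIp18 EIp19 EIp20 EIp21 EIp22 EIp23 EIp24 EIp25 EIp26 EIp27 EIp28 EIp30 EIp31 EIp32 EIp33 EIp34 EIp35 EIp36 EIp37 EIp38 EIp39 EIp40 EIp41 EIp42 EIp43 EIp44 EIp45 EIp46 EIp47 EIp48 EIp49 EIp50 EIp51 EIp52 EIp53 EIp55 EIp56 EIp57 EIp58 EIp59 EIp60 EIp61 EIp62 EIp63 EIp64 EIp65 EIp66 EIp67 EIp68 EIp69 EIp70 EIp71 EIp72 EIp74 EIp75 EIp76 EIp77 EIp78 EIp79 EIp80 EIp81 EIp82 EIp83 EIp84 EIp85 EIp86 EIp87 EIp88 EIp89 EIp90 EIp91 EIp92 EIp93 EIp94 EIp95 EIp96 EIp97 EIp98 EIp99 EIp100 EIp101 EIp102 EIp103 EIp104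 EIp105 EIp106 EIp107 EIp108 EIp109 EIp110 EIp111 EIp112 EIp113 EIp114 EIp115 EIp116 EIp117 EIp118 EIp119 EIp120 EIp121 EIp123 EIp124 EIp125 EIp126 EIp127 EIp128 EIp129 EIp130 EIp131 EIp132 EIp133 EIp134 EIp135 EIp136 EIp137 EIp138 EIp139 EIp140 EIp141 EIp142 EIp143 EIp144 EIp145 EIp146 EIp147 EIp148 EIp149 EIp150 EIp151 EIp152 EIp153 EIp154 EIp155 EIp156 EIp157 EIp158 EIp159 EIp160 EIp161 EIp162 EIp163 EIp164 EIp165 EIp166 EIp167 EIp168 EIp169 EIp170 EIp171 EIp172 EIp173 EIp174 EIp175 EIp176 EIp177 EIp178 EIp179 EIp180 EIp181

lemmas EIcross = EIc29 EIc54 EIc73 EIc122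


abbreviation "G1 \<equiv> {Inl 2, Inl 0} :: (nat + nat) set"
abbreviation "H1 \<equiv> {Inr 1, Inr 2} :: (nat + nat) set"
abbreviation "G2 \<equiv> {Inl 0, Inr 0} :: (nat + nat) set"
abbreviation "H2 \<equiv> {Inl 1, Inr 1} :: (nat + nat) set"
abbreviation "PP1 \<equiv> Complex (-3/4) (-9/4)"
abbreviation "PP2 \<equiv> Complex (1/2) (-3/4)"

lemma EIc_pts: "p \<in> cr G1 H1 \<Longrightarrow> p = PP1" "p \<in> cr H1 G1 \<Longrightarrow> p = PP1"
  "p \<in> cr G2 H2 \<Longrightarrow> p = PP2" "p \<in> cr H2 G2 \<Longrightarrow> p = PP2"
  using EIcross by blast+

lemma crossing_char:
  assumes "e \<in> EE" "f \<in> EE" "e \<noteq> f" "p \<in> cr e f"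
  shows "((e = G1 \<and> f = H1) \<or> (e = H1 \<and> f = G1)) \<and> p = PP1 \<or>
         ((e = G2 \<and> f = H2) \<or> (e = H2 \<and> f = G2)) \<and> p = PP2"
  using assms unfolding E_eq
  apply (elim insertE emptyE)
  apply (simp_all add: EIpairs[simplified])
  apply (auto dest: EIc_pts[simplified])
  done




lemma posn_ne:
  "posn (Inl 0) \<noteq> posn (Inl 1)"
  "posn (Inl 0) \<noteq> posn (Inl 2)"
  "posn (Inl 0) \<noteq> posn (Inr 0)"
  "posn (Inl 0) \<noteq> posn (Inr 1)"
  "posn (Inl 0) \<noteq> posn (Inr 2)"
  "posn (Inl 1) \<noteq> posn (Inl 0)"
  "posn (Inl 1) \<noteq> posn (Inl 2)"
  "posn (Inl 1) \<noteq> posn (Inr 0)"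
  "posn (Inl 1) \<noteq> posn (Inr 1)"
  "posn (Inl 1) \<noteq> posn (Inr 2)"
  "posn (Inl 2) \<noteq> posn (Inl 0)"
  "posn (Inl 2) \<noteq> posn (Inl 1)"
  "posn (Inl 2) \<noteq> posn (Inr 0)"
  "posn (Inl 2) \<noteq> posn (Inr 1)"
  "posn (Inl 2) \<noteq> posn (Inr 2)"
  "posn (Inr 0) \<noteq> posn (Inl 0)"
  "posn (Inr 0) \<noteq> posn (Inl 1)"
  "posn (Inr 0) \<noteq> posn (Inl 2)"
  "posn (Inr 0) \<noteq> posn (Inr 1)"
  "posn (Inr 0) \<noteq> posn (Inr 2)"
  "posn (Inr 1) \<noteq> posn (Inl 0)"
  "posn (Inr 1) \<noteq> posn (Inl 1)"
  "posn (Inr 1) \<noteq> posn (Inl 2)"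
  "posn (Inr 1) \<noteq> posn (Inr 0)"
  "posn (Inr 1) \<noteq> posn (Inr 2)"
  "posn (Inr 2) \<noteq> posn (Inl 0)"
  "posn (Inr 2) \<noteq> posn (Inl 1)"
  "posn (Inr 2) \<noteq> posn (Inl 2)"
  "posn (Inr 2) \<noteq> posn (Inr 0)"
  "posn (Inr 2) \<noteq> posn (Inr 1)"
  by (simp_all add: posn_def)

lemma edge_ok:
  assumes "a \<noteq> b" "posn a \<noteq> posn b" "a \<in> V" "b \<in> V"
    "\<forall>w\<in>V. w \<noteq> a \<and> w \<noteq> b \<longrightarrow> posn w \<notin> closed_segment (posn a) (posn b)"
  shows "arc (crvn {a,b}) \<and> {pathstart (crvn {a,b}), pathfinish (crvn {a,b})} = posn ` {a,b} \<and>
         path_image (crvn {a,b}) \<inter> posn ` V = posn ` {a,b}"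
  using assms crvn_props[OF assms(1)] by auto

lemma is_drawing_n: "is_drawing VV EE posn crvn"
  unfolding is_drawing_def
proof (rule conjI)
  show "inj_on posn VV" by (simp add: V_eq posn_ne[simplified])
  show "\<forall>e\<in>EE. arc (crvn e) \<and> {pathstart (crvn e), pathfinish (crvn e)} = posn ` e \<and>
         path_image (crvn e) \<inter> posn ` VV = posn ` e"
    unfolding E_eq
    apply (intro ballI)
    apply (elim insertE emptyE)
    apply (simp_all only:)
    apply (rule edge_ok; simp add: V_eq posn_ne[simplified] nonmem[simplified])+
    done
qed

lemma crosses_cr: "crosses_at EE posn crvn e f p \<Longrightarrow> e \<in> EE \<and> f \<in> EE \<and> e \<noteq> f \<and> p \<in> cr e f"
  by (simp add: crosses_at_def cr_def)

lemma char2: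
  assumes "crosses_at EE posn crvn e f p"
  shows "((e = G1 \<and> f = H1) \<or> (e = H1 \<and> f = G1)) \<and> p = PP1 \<or>
         ((e = G2 \<and> f = H2) \<or> (e = H2 \<and> f = G2)) \<and> p = PP2"
proof -
  have "e \<in> EE \<and> f \<in> EE \<and> e \<noteq> f \<and> p \<in> cr e f" using assms by (rule crosses_cr)
  then show ?thesis by (intro crossing_char) auto
qed

lemma PPne: "PP1 \<noteq> PP2" by simp

lemma disj_ok: "crosses_at EE posn crvn e f p \<Longrightarrow> e \<inter> f = {}"
  by (drule char2) (elim disjE conjE; simp)

lemma uniq_ok:
  assumes "crosses_at EE posn crvn e f p" "crosses_at EE posn crvn e g q"
  shows "f = g \<and> p = q"
proof -
  have ne: "G1 \<noteq> H1" "G1 \<noteq> G2" "G1 \<noteq> H2" "H1 \<noteq> G2" "H1 \<noteq> H2" "G2 \<noteq> H2"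
    by (simp_all add: doubleton_eq_iff)
  from char2[OF assms(1)] char2[OF assms(2)] show ?thesis
    apply (elim disjE conjE)
    using ne by simp_all
qed

lemma card_ok:
  assumes "crosses_at EE posn crvn e1 f1 p" "crosses_at EE posn crvn e2 f2 q" "p \<noteq> q"
  shows "card ((e1 \<union> f1) \<inter> (e2 \<union> f2)) \<le> 2"
proof -
  have k1: "card ((G1 \<union> H1) \<inter> (G2 \<union> H2)) \<le> 2" by simp
  have k2: "card ((G2 \<union> H2) \<inter> (G1 \<union> H1)) \<le> 2" by simp
  have u: "H1 \<union> G1 = G1 \<union> H1" "H2 \<union> G2 = G2 \<union> H2" by blast+
  from char2[OF assms(1)] char2[OF assms(2)] show ?thesis
    apply (elim disjE conjE)
    using k1 k2 u assms(3) by simp_all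
qed

lemma has2: "has_1planar_drawing_le VV EE 2"
  unfolding has_1planar_drawing_le_def one_planar_drawing_def
  apply (rule exI[of _ posn], rule exI[of _ crvn])
  apply (intro conjI allI impI is_drawing_n)
    apply (erule disj_ok)
   apply (erule conjE, drule (1) uniq_ok, erule conjunct1)
  apply (erule conjE, drule (1) uniq_ok, erule conjunct2)
  apply (elim conjE, erule (2) card_ok)
  done


lemma all3: "(\<forall>i<(3::nat). P i) \<longleftrightarrow> P 0 \<and> P 1 \<and> P 2"
proof
  assume "\<forall>i<3. P i" then show "P 0 \<and> P 1 \<and> P 2" by simp
next
  assume "P 0 \<and> P 1 \<and> P 2"
  then show "\<forall>i<3. P i" by (auto simp: less_Suc_eq numeral_3_eq_3 numeral_2_eq_2)
qed

lemma bip: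
  assumes "r \<in> EE"
  shows "\<exists>av bv. (\<forall>i<(3::nat). av i \<in> VV \<and> bv i \<in> VV) \<and> (\<forall>i<3. \<forall>k<3. i \<noteq> k \<longrightarrow> av i \<noteq> av k \<and> bv i \<noteq> bv k)
     \<and> (\<forall>i<3. \<forall>j<3. av i \<noteq> bv j) \<and> (\<forall>i<3. \<forall>j<3. {av i, bv j} \<in> EE \<and> {av i, bv j} \<noteq> r)"
  using assms unfolding E_eq
  apply (elim insertE emptyE)
   apply (rule exI[of _ "(\<lambda>i::nat. if i = 0 then Inl 0 else if i = 1 then Inr 0 else Inr 2)"], rule exI[of _ "(\<lambda>i::nat. if i = 0 then Inl 1 else if i = 1 then Inl 2 else Inr 1)"], simp add: all3 V_eq E_eq doubleton_eq_iff)
   apply (rule exI[of _ "(\<lambda>i::nat. if i = 0 then Inr 0 else if i = 1 then Inr 2 else Inl 1)"], rule exI[of _ "(\<lambda>i::nat. if i = 0 then Inl 0 else if i = 1 then Inr 1 else Inl 2)"], simp add: all3 V_eq E_eq doubleton_eq_iff)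
   apply (rule exI[of _ "(\<lambda>i::nat. if i = 0 then Inl 0 else if i = 1 then Inr 0 else Inr 2)"], rule exI[of _ "(\<lambda>i::nat. if i = 0 then Inl 1 else if i = 1 then Inl 2 else Inr 1)"], simp add: all3 V_eq E_eq doubleton_eq_iff)
   apply (rule exI[of _ "(\<lambda>i::nat. if i = 0 then Inl 1 else if i = 1 then Inr 0 else Inr 2)"], rule exI[of _ "(\<lambda>i::nat. if i = 0 then Inl 0 else if i = 1 then Inl 2 else Inr 1)"], simp add: all3 V_eq E_eq doubleton_eq_iff)
   apply (rule exI[of _ "(\<lambda>i::nat. if i = 0 then Inr 0 else if i = 1 then Inr 2 else Inl 0)"], rule exI[of _ "(\<lambda>i::nat. if i = 0 then Inl 1 else if i = 1 then Inr 1 else Inl 2)"], simp add: all3 V_eq E_eq doubleton_eq_iff)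
   apply (rule exI[of _ "(\<lambda>i::nat. if i = 0 then Inl 1 else if i = 1 then Inr 0 else Inr 2)"], rule exI[of _ "(\<lambda>i::nat. if i = 0 then Inl 0 else if i = 1 then Inl 2 else Inr 1)"], simp add: all3 V_eq E_eq doubleton_eq_iff)
   apply (rule exI[of _ "(\<lambda>i::nat. if i = 0 then Inl 2 else if i = 1 then Inr 0 else Inr 2)"], rule exI[of _ "(\<lambda>i::nat. if i = 0 then Inl 0 else if i = 1 then Inl 1 else Inr 1)"], simp add: all3 V_eq E_eq doubleton_eq_iff)
   apply (rule exI[of _ "(\<lambda>i::nat. if i = 0 then Inr 0 else if i = 1 then Inr 2 else Inl 0)"], rule exI[of _ "(\<lambda>i::nat. if i = 0 then Inl 2 else if i = 1 then Inr 1 else Inl 1)"], simp add: all3 V_eq E_eq doubleton_eq_iff)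
   apply (rule exI[of _ "(\<lambda>i::nat. if i = 0 then Inl 2 else if i = 1 then Inr 0 else Inr 2)"], rule exI[of _ "(\<lambda>i::nat. if i = 0 then Inl 0 else if i = 1 then Inl 1 else Inr 1)"], simp add: all3 V_eq E_eq doubleton_eq_iff)
   apply (rule exI[of _ "(\<lambda>i::nat. if i = 0 then Inr 0 else if i = 1 then Inr 1 else Inr 2)"], rule exI[of _ "(\<lambda>i::nat. if i = 0 then Inl 0 else if i = 1 then Inl 1 else Inl 2)"], simp add: all3 V_eq E_eq doubleton_eq_iff)
   apply (rule exI[of _ "(\<lambda>i::nat. if i = 0 then Inr 0 else if i = 1 then Inr 1 else Inr 2)"], rule exI[of _ "(\<lambda>i::nat. if i = 0 then Inl 0 else if i = 1 then Inl 1 else Inl 2)"], simp add: all3 V_eq E_eq doubleton_eq_iff)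
   apply (rule exI[of _ "(\<lambda>i::nat. if i = 0 then Inr 0 else if i = 1 then Inr 2 else Inl 2)"], rule exI[of _ "(\<lambda>i::nat. if i = 0 then Inl 0 else if i = 1 then Inl 1 else Inr 1)"], simp add: all3 V_eq E_eq doubleton_eq_iff)
   apply (rule exI[of _ "(\<lambda>i::nat. if i = 0 then Inr 0 else if i = 1 then Inr 2 else Inl 0)"], rule exI[of _ "(\<lambda>i::nat. if i = 0 then Inl 1 else if i = 1 then Inl 2 else Inr 1)"], simp add: all3 V_eq E_eq doubleton_eq_iff)
   apply (rule exI[of _ "(\<lambda>i::nat. if i = 0 then Inr 0 else if i = 1 then Inr 2 else Inl 1)"], rule exI[of _ "(\<lambda>i::nat. if i = 0 then Inl 2 else if i = 1 then Inl 0 else Inr 1)"], simp add: all3 V_eq E_eq doubleton_eq_iff)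
  done


definition ori :: "complex \<Rightarrow> (real \<Rightarrow> complex) \<Rightarrow> real \<Rightarrow> complex" where
  "ori a c = (if pathstart c = a then c else reversepath c)"

lemma ori_props:
  assumes "arc c" "{pathstart c, pathfinish c} = {a,b}" "a \<noteq> b"
  shows "arc (ori a c) \<and> pathstart (ori a c) = a \<and> pathfinish (ori a c) = b \<and> path_image (ori a c) = path_image c"
proof (cases "pathstart c = a")
  case True
  then have "pathfinish c = b" using assms(2,3) by (auto simp: doubleton_eq_iff)
  then show ?thesis using True assms(1) by (simp add: ori_def)
next
  case False
  then have "pathstart c = b" "pathfinish c = a" using assms(2,3) by (auto simp: doubleton_eq_iff)
  then show ?thesis using False assms(1) by (simp add: ori_def arc_reversepath)
qed

lemma no_low:
  assumes "has_1planar_drawing_le VV EE 1"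
  shows False
proof -
  obtain pos crv where op: "one_planar_drawing VV EE pos crv"
    and cc0: "\<forall>e1 f1 p e2 f2 q. crosses_at EE pos crv e1 f1 p \<and> crosses_at EE pos crv e2 f2 q \<and> p \<noteq> q
               \<longrightarrow> card ((e1 \<union> f1) \<inter> (e2 \<union> f2)) \<le> 1"
    using assms unfolding has_1planar_drawing_le_def by (elim exE conjE) (rule that; assumption)
  note op' = op[unfolded one_planar_drawing_def]
  have dr: "is_drawing VV EE pos crv" using op' by (rule conjunct1)
  note adj = conjunct1[OF conjunct2[OF op'], rule_format]
  note un = conjunct2[OF conjunct2[OF op'], rule_format]
  note cc = cc0[rule_format]
  note dr' = dr[unfolded is_drawing_def]
  have inj: "inj_on pos VV" using dr' by (rule conjunct1)
  note drE = conjunct2[OF dr', rule_format]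
  have Esub: "\<And>e. e \<in> EE \<Longrightarrow> e \<subseteq> VV \<and> card e = 2"
  proof -
    fix e assume "e \<in> EE"
    then show "e \<subseteq> VV \<and> card e = 2" unfolding E_eq V_eq by (elim insertE emptyE) simp_all
  qed
  have fV: "finite VV" "card VV = 6" by (simp_all add: V_eq)
  have c4: "e \<union> f \<subseteq> VV \<and> finite (e \<union> f) \<and> card (e \<union> f) = 4" if c: "crosses_at EE pos crv e f p" for e f p
  proof -
    have ef: "e \<in> EE" "f \<in> EE" using c unfolding crosses_at_def by auto
    have "e \<inter> f = {}" by (rule adj[OF c])
    moreover have "finite e" "finite f" "card e = 2" "card f = 2" using Esub[OF ef(1)] Esub[OF ef(2)] fV(1)
      by (auto intro: finite_subset)
    ultimately show ?thesis using Esub[OF ef(1)] Esub[OF ef(2)] by (simp add: card_Un_disjoint)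
  qed
  have ge2: "2 \<le> card ((e1 \<union> f1) \<inter> (e2 \<union> f2))"
    if "crosses_at EE pos crv e1 f1 p" "crosses_at EE pos crv e2 f2 q" for e1 f1 p e2 f2 q
  proof -
    note a = c4[OF that(1)] and b = c4[OF that(2)]
    have "card (e1 \<union> f1) + card (e2 \<union> f2) = card ((e1 \<union> f1) \<union> (e2 \<union> f2)) + card ((e1 \<union> f1) \<inter> (e2 \<union> f2))"
      using a b by (intro card_Un_Int) auto
    moreover have "card ((e1 \<union> f1) \<union> (e2 \<union> f2)) \<le> 6"
      using a b fV card_mono[of VV "(e1 \<union> f1) \<union> (e2 \<union> f2)"] by auto
    ultimately show ?thesis using a b by linarith
  qed
  obtain r where r: "r \<in> EE" "\<And>e f p. crosses_at EE pos crv e f p \<Longrightarrow> r \<in> {e,f}"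
  proof (cases "\<exists>e f p. crosses_at EE pos crv e f p")
    case True
    then obtain e0 f0 p0 where c0: "crosses_at EE pos crv e0 f0 p0" by blast
    show ?thesis
    proof (rule that[of e0])
      show "e0 \<in> EE" using c0 unfolding crosses_at_def by blast
      fix e f p assume c: "crosses_at EE pos crv e f p"
      have pp: "p = p0"
      proof (rule ccontr)
        assume "p \<noteq> p0"
        then have "card ((e \<union> f) \<inter> (e0 \<union> f0)) \<le> 1" using cc c c0 by blast
        then show False using ge2[OF c c0] by linarith
      qed
      show "e0 \<in> {e,f}"
      proof (rule ccontr)
        assume n: "e0 \<notin> {e,f}"
        have "crosses_at EE pos crv e0 e p0" using c c0 n pp unfolding crosses_at_def by auto
        then have 1: "e = f0" using un[OF conjI[OF c0]] by blast
        have "crosses_at EE pos crv e0 f p0" using c c0 n pp unfolding crosses_at_def by auto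
        then have 2: "f = f0" using un[OF conjI[OF c0]] by blast
        show False using c 1 2 unfolding crosses_at_def by blast
      qed
    qed
  next
    case False
    show ?thesis
    proof (rule that[of "{Inl 0, Inl 1}"])
      show "{Inl 0, Inl 1} \<in> EE" by (simp add: E_eq)
      fix e f p assume "crosses_at EE pos crv e f p"
      then show "{Inl 0, Inl 1} \<in> {e, f}" using False by blast
    qed
  qed
  have noncross: "path_image (crv e) \<inter> path_image (crv f) \<subseteq> pos ` (e \<inter> f)"
    if ef: "e \<in> EE" "f \<in> EE" "e \<noteq> f" "e \<noteq> r" "f \<noteq> r" for e f
  proof
    fix y assume y: "y \<in> path_image (crv e) \<inter> path_image (crv f)"
    show "y \<in> pos ` (e \<inter> f)"
    proof (cases "y \<in> pos ` VV")
      case True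
      have ye: "y \<in> pos ` e"
      proof -
        have "y \<in> path_image (crv e) \<inter> pos ` VV" using y True by simp
        then show ?thesis using drE[OF ef(1)] by simp
      qed
      have yf: "y \<in> pos ` f"
      proof -
        have "y \<in> path_image (crv f) \<inter> pos ` VV" using y True by simp
        then show ?thesis using drE[OF ef(2)] by simp
      qed
      obtain v where v: "v \<in> e" "y = pos v" using ye by (rule imageE) simp
      obtain w where w: "w \<in> f" "y = pos w" using yf by (rule imageE) simp
      have vV: "v \<in> VV" using v(1) Esub[OF ef(1)] by (simp add: subset_iff)
      have wV: "w \<in> VV" using w(1) Esub[OF ef(2)] by (simp add: subset_iff)
      have "v = w" using inj_onD[OF inj _ vV wV] v(2) w(2) by simp
      then show ?thesis using v w by simp
    next
      case False
      have "pos ` e \<subseteq> pos ` VV" "pos ` f \<subseteq> pos ` VV" using Esub[OF ef(1)] Esub[OF ef(2)] by (simp_all add: image_mono)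
      then have "y \<notin> pos ` e" "y \<notin> pos ` f" using False by (auto simp only: subset_iff)
      then have "crosses_at EE pos crv e f y"
        using y ef(1-3) unfolding crosses_at_def edge_interior_def by simp
      then have "r \<in> {e,f}" by (rule r(2))
      then show ?thesis using ef(4,5) by simp
    qed
  qed
  obtain av bv where ab: "\<forall>i<(3::nat). av i \<in> VV \<and> bv i \<in> VV"
    "\<forall>i<(3::nat). \<forall>k<3. i \<noteq> k \<longrightarrow> av i \<noteq> av k \<and> bv i \<noteq> bv k"
    "\<forall>i<(3::nat). \<forall>j<3. av i \<noteq> bv j"
    "\<forall>i<(3::nat). \<forall>j<3. {av i, bv j} \<in> EE \<and> {av i, bv j} \<noteq> r"
    using bip[OF r(1)] by (elim exE conjE) (rule that; assumption)
  define A where "A i = pos (av i)" for i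
  define B where "B j = pos (bv j)" for j
  define g where "g i j = ori (A i) (crv {av i, bv j})" for i j
  have AB: "A i \<noteq> B j" if "i < 3" "j < 3" for i j
    using ab(1,3) that inj unfolding A_def B_def inj_on_def by metis
  have gp: "arc (g i j) \<and> pathstart (g i j) = A i \<and> pathfinish (g i j) = B j \<and>
      path_image (g i j) = path_image (crv {av i, bv j})" if ij: "i < 3" "j < 3" for i j
  proof -
    have e: "{av i, bv j} \<in> EE" using ab(4) ij by blast
    show ?thesis unfolding g_def
      by (rule ori_props) (use drE[OF e] AB[OF ij] in \<open>auto simp: A_def B_def\<close>)
  qed
  show False
  proof (rule K33[of A B g])
    show "\<forall>i<3. \<forall>k<3. i \<noteq> k \<longrightarrow> A i \<noteq> A k"
      using ab(1,2) inj unfolding A_def inj_on_def by metis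
    show "\<forall>j<3. \<forall>l<3. j \<noteq> l \<longrightarrow> B j \<noteq> B l"
      using ab(1,2) inj unfolding B_def inj_on_def by metis
    show "\<forall>i<3. \<forall>j<3. A i \<noteq> B j" using AB by blast
    show "\<forall>i<3. \<forall>j<3. arc (g i j) \<and> pathstart (g i j) = A i \<and> pathfinish (g i j) = B j"
      using gp by blast
    show "\<forall>i<3. \<forall>j<3. \<forall>k<3. \<forall>l<3. (i,j) \<noteq> (k,l) \<longrightarrow>
                 path_image (g i j) \<inter> path_image (g k l) \<subseteq> {A i, B j} \<inter> {A k, B l}"
    proof (intro allI impI)
      fix i j k l :: nat assume h: "i < 3" "j < 3" "k < 3" "l < 3" "(i,j) \<noteq> (k,l)"
      have e1: "{av i, bv j} \<in> EE" "{av i, bv j} \<noteq> r" using ab(4) h by blast+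
      have e2: "{av k, bv l} \<in> EE" "{av k, bv l} \<noteq> r" using ab(4) h by blast+
      have ne: "{av i, bv j} \<noteq> {av k, bv l}"
      proof
        assume "{av i, bv j} = {av k, bv l}"
        then have "av i = av k \<and> bv j = bv l \<or> av i = bv l \<and> bv j = av k" by (simp add: doubleton_eq_iff)
        moreover have "av i \<noteq> bv l" using ab(3) h by blast
        ultimately have "av i = av k" "bv j = bv l" by blast+
        then have "i = k" "j = l" using ab(2) h by blast+
        then show False using h by blast
      qed
      have "path_image (g i j) \<inter> path_image (g k l) \<subseteq> pos ` ({av i, bv j} \<inter> {av k, bv l})"
        using noncross[OF e1(1) e2(1) ne e1(2) e2(2)] gp[OF h(1,2)] gp[OF h(3,4)] by simp
      also have "\<dots> \<subseteq> {A i, B j} \<inter> {A k, B l}" unfolding A_def B_def by auto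
      finally show "path_image (g i j) \<inter> path_image (g k l) \<subseteq> {A i, B j} \<inter> {A k, B l}" .
    qed
  qed
qed


lemma has_le_mono: "has_1planar_drawing_le V E i \<Longrightarrow> i \<le> j \<Longrightarrow> has_1planar_drawing_le V E j"
  unfolding has_1planar_drawing_le_def by (meson order_trans)

theorem lemma9:
  shows "class_C2 (join_verts (cycle_verts 3) (path_verts 3))
                  (join_edges (cycle_verts 3) (cycle_edges 3) (path_verts 3) (path_edges 3))"
proof -
  have n1: "\<not> has_1planar_drawing_le VV EE 1" using no_low by blast
  have n0: "\<not> has_1planar_drawing_le VV EE 0" using n1 has_le_mono[of VV EE 0 1] by fastforce
  show ?thesis unfolding class_C2_def class_C1_def class_C0_def using n0 n1 has2 by simp
qed

end
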